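(* Let $0<\epsilon<1$ and let $m_{1},\dots,m_{d},l_{1},\dots,l_{d},k_{1},\dots,k_{d}\in\mathbb{Z}_{>0}$ be chosen in the order $m_d,l_d,k_d,m_{d-1},l_{d-1},k_{d-1},\dots,m_1,l_1,k_1$, each sufficiently large in a manner depending on $\lambda$, $\epsilon$ and all previously chosen parameters (that is: $m_d$ large w.r.t. $\epsilon^{-1}$; $l_j$ large w.r.t. $m_j$; $k_j$ large w.r.t. $l_j$; and $m_j$ large w.r.t. $k_{j+1}$ for $1\le j<d$). Let $x,y\in\mathbb{R}^{d}$ with $\epsilon\le|x-y|\le\epsilon^{-1}$, and set $\zeta:=\frac{1}{2}(\delta_{x}+\delta_{y})$. Then there exists $1\le j\le d$ such that for $a:=\lfloor\frac{1}{2\chi_{j}}\log k_{j}\rfloor$, \[ \frac{1}{m_{j}}H\big(\zeta^{*k_{j}},\mathcal{E}_{l_{j}-a+m_{j}}\mid\mathcal{E}_{l_{j}-a}\vee\pi_{[d]\setminus\{j\}}^{-1}\mathcal{E}_{l_{j}-a+m_{j}}\big)>\chi_{j}-\epsilon. \]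
   Context: Fix $d\ge1$ and $\lambda=(\lambda_1,\dots,\lambda_d)\in(0,1)^d$ with $\lambda_1>\dots>\lambda_d$; logs base 2, $\chi_j:=-\log\lambda_j$. $\zeta^{*k}$ is the $k$-fold self-convolution. $\mathcal{E}_n$ ($n\in\mathbb{Z}$) is the partition of $\mathbb{R}^d$ into boxes $D_1\times\dots\times D_d$ with each $D_j$ of the form $[k2^{-\lfloor\chi_jn\rfloor},(k+1)2^{-\lfloor\chi_jn\rfloor})$, $k\in\mathbb{Z}$. $\pi_J$ is orthogonal projection onto $\mathrm{span}\{e_j:j\in J\}$ and $\pi_J^{-1}\mathcal{E}_n:=\{\pi_J^{-1}E:E\in\mathcal{E}_n\}$. $H(\mu,\mathcal{C}\mid\mathcal{D}):=\sum_{D\in\mathcal{D}}\mu(D)H(\mu_D,\mathcal{C})$ with $H(\mu,\mathcal{C})=-\sum_C\mu(C)\log\mu(C)$, and $\vee$ is common refinement. *)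

theory Defs
  imports "HOL-Probability.Probability"
begin

text \<open>Points of R^d are functions nat => real; coordinates 1..d are used,
  all other coordinates are required to be 0 where relevant.\<close>

definition chi :: "(nat \<Rightarrow> real) \<Rightarrow> nat \<Rightarrow> real" where
  "chi lam j = - log 2 (lam j)"

definition eucl_norm :: "nat \<Rightarrow> (nat \<Rightarrow> real) \<Rightarrow> real" where
  "eucl_norm d v = sqrt (\<Sum>i=1..d. (v i)\<^sup>2)"

definition conv_pmf :: "(nat \<Rightarrow> real) pmf \<Rightarrow> (nat \<Rightarrow> real) pmf \<Rightarrow> (nat \<Rightarrow> real) pmf" where
  "conv_pmf p q = map_pmf (\<lambda>(a, b). (\<lambda>i. a i + b i)) (pair_pmf p q)"

fun conv_pow :: "(nat \<Rightarrow> real) pmf \<Rightarrow> nat \<Rightarrow> (nat \<Rightarrow> real) pmf" where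
  "conv_pow p 0 = return_pmf (\<lambda>_. 0)"
| "conv_pow p (Suc k) = conv_pmf p (conv_pow p k)"

definition dyadic_part :: "nat \<Rightarrow> (nat \<Rightarrow> real) \<Rightarrow> int \<Rightarrow> (nat \<Rightarrow> real) set set" where
  "dyadic_part d lam n =
     {{v. \<forall>i\<in>{1..d}. real_of_int (c i) * 2 powr (- real_of_int \<lfloor>chi lam i * real_of_int n\<rfloor>) \<le> v i
            \<and> v i < (real_of_int (c i) + 1) * 2 powr (- real_of_int \<lfloor>chi lam i * real_of_int n\<rfloor>)}
      | c :: nat \<Rightarrow> int. True}"

definition proj :: "nat set \<Rightarrow> (nat \<Rightarrow> real) \<Rightarrow> (nat \<Rightarrow> real)" where
  "proj J v = (\<lambda>i. if i \<in> J then v i else 0)"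

definition preimage_part :: "nat set \<Rightarrow> (nat \<Rightarrow> real) set set \<Rightarrow> (nat \<Rightarrow> real) set set" where
  "preimage_part J \<E> = {proj J -` E | E. E \<in> \<E>}"

definition join :: "'a set set \<Rightarrow> 'a set set \<Rightarrow> 'a set set" where
  "join \<C> \<D> = {C \<inter> D | C D. C \<in> \<C> \<and> D \<in> \<D> \<and> C \<inter> D \<noteq> {}}"

definition entropy_part :: "'a pmf \<Rightarrow> 'a set set \<Rightarrow> real" where
  "entropy_part \<mu> \<C> = - (\<Sum>C\<in>{C\<in>\<C>. measure_pmf.prob \<mu> C \<noteq> 0}.
       measure_pmf.prob \<mu> C * log 2 (measure_pmf.prob \<mu> C))"

definition cond_entropy_part :: "'a pmf \<Rightarrow> 'a set set \<Rightarrow> 'a set set \<Rightarrow> real" where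
  "cond_entropy_part \<mu> \<C> \<D> = (\<Sum>D\<in>{D\<in>\<D>. measure_pmf.prob \<mu> D \<noteq> 0}.
       measure_pmf.prob \<mu> D * entropy_part (cond_pmf \<mu> D) \<C>)"

text \<open>Choosing m_j, l_j, k_j (j = d down to 1), in the order m_j, l_j, k_j,
  each sufficiently large depending on everything chosen before.\<close>
fun large_choice :: "nat \<Rightarrow> ((nat \<Rightarrow> nat) \<Rightarrow> (nat \<Rightarrow> nat) \<Rightarrow> (nat \<Rightarrow> nat) \<Rightarrow> bool)
     \<Rightarrow> (nat \<Rightarrow> nat) \<Rightarrow> (nat \<Rightarrow> nat) \<Rightarrow> (nat \<Rightarrow> nat) \<Rightarrow> bool" where
  "large_choice 0 P m l k = P m l k"
| "large_choice (Suc j) P m l k =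
     (\<forall>\<^sub>F a in sequentially. \<forall>\<^sub>F b in sequentially. \<forall>\<^sub>F c in sequentially.
        large_choice j P (m(Suc j := a)) (l(Suc j := b)) (k(Suc j := c)))"

end

theory Submission
  imports Defs
begin

lemma LC_mono:
  assumes "\<And>m l k. P m l k \<Longrightarrow> Q m l k"
  shows "large_choice j P m l k \<Longrightarrow> large_choice j Q m l k"
proof (induction j arbitrary: m l k)
  case 0 then show ?case using assms by simp
next
  case (Suc j)
  then show ?case by (auto elim!: eventually_mono)
qed

lemma LC_intro:
  fixes Am Al Ak :: "nat \<Rightarrow> (nat \<Rightarrow> nat) \<Rightarrow> (nat \<Rightarrow> nat) \<Rightarrow> (nat \<Rightarrow> nat) \<Rightarrow> nat \<Rightarrow> bool"
  assumes evm: "\<And>t m l k. eventually (Am t m l k) sequentially"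
    and evl: "\<And>t m l k. eventually (Al t m l k) sequentially"
    and evk: "\<And>t m l k. eventually (Ak t m l k) sequentially"
    and depm: "\<And>t m l k m' l' k'. (\<forall>i>t. m i = m' i \<and> l i = l' i \<and> k i = k' i) \<Longrightarrow> Am t m l k = Am t m' l' k'"
    and depl: "\<And>t m l k m' l' k'. (\<forall>i>t. m i = m' i \<and> l i = l' i \<and> k i = k' i) \<Longrightarrow> m t = m' t \<Longrightarrow> Al t m l k = Al t m' l' k'"
    and depk: "\<And>t m l k m' l' k'. (\<forall>i>t. m i = m' i \<and> l i = l' i \<and> k i = k' i) \<Longrightarrow> m t = m' t \<Longrightarrow> l t = l' t \<Longrightarrow> Ak t m l k = Ak t m' l' k'"
    and P: "\<And>m' l' k'. (\<forall>i>j. m' i = m i \<and> l' i = l i \<and> k' i = k i) \<Longrightarrow>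
        (\<forall>t\<in>{1..j}. Am t m' l' k' (m' t) \<and> Al t m' l' k' (l' t) \<and> Ak t m' l' k' (k' t)) \<Longrightarrow> P m' l' k'"
  shows "large_choice j P m l k"
  using P
proof (induction j arbitrary: m l k)
  case 0
  then show ?case by simp
next
  case (Suc j)
  let ?t = "Suc j"
  have A: "eventually (Am ?t m l k) sequentially" by (rule evm)
  have key: "large_choice j P (m(?t := a)) (l(?t := b)) (k(?t := c))"
    if a: "Am ?t m l k a" and b: "Al ?t (m(?t:=a)) l k b" and c: "Ak ?t (m(?t:=a)) (l(?t:=b)) k c" for a b c
  proof (rule Suc.IH)
    fix m' l' k'
    assume agr: "\<forall>i>j. m' i = (m(?t := a)) i \<and> l' i = (l(?t := b)) i \<and> k' i = (k(?t := c)) i"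
      and cond: "\<forall>t\<in>{1..j}. Am t m' l' k' (m' t) \<and> Al t m' l' k' (l' t) \<and> Ak t m' l' k' (k' t)"
    have agr2: "\<forall>i>?t. m i = m' i \<and> l i = l' i \<and> k i = k' i" using agr by auto
    have "Am ?t m' l' k' (m' ?t)" using a depm[OF agr2] agr by auto
    moreover have "Al ?t m' l' k' (l' ?t)"
      using b depl[where t="?t" and m="m(?t:=a)" and l=l and k=k and m'=m' and l'=l' and k'=k'] agr by auto
    moreover have "Ak ?t m' l' k' (k' ?t)"
      using c depk[where t="?t" and m="m(?t:=a)" and l="l(?t:=b)" and k=k and m'=m' and l'=l' and k'=k'] agr by auto
    ultimately have "\<forall>t\<in>{1..?t}. Am t m' l' k' (m' t) \<and> Al t m' l' k' (l' t) \<and> Ak t m' l' k' (k' t)"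
      using cond by (auto simp: le_Suc_eq)
    then show "P m' l' k'" using Suc.prems agr2 by auto
  qed
  show ?case unfolding large_choice.simps
  proof (rule eventually_mono[OF A])
    fix a assume a: "Am ?t m l k a"
    show "\<forall>\<^sub>F b in sequentially. \<forall>\<^sub>F c in sequentially. large_choice j P (m(?t := a)) (l(?t := b)) (k(?t := c))"
    proof (rule eventually_mono[OF evl[of ?t "m(?t:=a)" l k]])
      fix b assume b: "Al ?t (m(?t:=a)) l k b"
      show "\<forall>\<^sub>F c in sequentially. large_choice j P (m(?t := a)) (l(?t := b)) (k(?t := c))"
        by (rule eventually_mono[OF evk[of ?t "m(?t:=a)" "l(?t:=b)" k]]) (rule key[OF a b])
    qed
  qed
qed

definition covers :: "'a set set \<Rightarrow> bool" where "covers P \<longleftrightarrow> (\<forall>z. \<exists>A\<in>P. z \<in> A)"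
definition disj :: "'a set set \<Rightarrow> bool" where "disj P \<longleftrightarrow> (\<forall>A\<in>P. \<forall>B\<in>P. \<forall>z. z \<in> A \<longrightarrow> z \<in> B \<longrightarrow> A = B)"

lemma finite_pos:
  assumes fin: "finite (set_pmf \<nu>)" and dj: "disj \<C>"
  shows "finite {C\<in>\<C>. measure_pmf.prob \<nu> C \<noteq> 0}"
proof -
  let ?F = "{C\<in>\<C>. measure_pmf.prob \<nu> C \<noteq> 0}"
  have ex: "\<exists>z. z \<in> C \<inter> set_pmf \<nu>" if "C \<in> ?F" for C
  proof (rule ccontr)
    assume "\<not> ?thesis"
    then have "C \<inter> set_pmf \<nu> = {}" by auto
    then have "measure_pmf.prob \<nu> C = 0" using measure_Int_set_pmf[of \<nu> C] by simp
    then show False using that by simp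
  qed
  define f where "f C = (SOME z. z \<in> C \<inter> set_pmf \<nu>)" for C
  have f: "f C \<in> C \<inter> set_pmf \<nu>" if "C \<in> ?F" for C
    using someI_ex[OF ex[OF that]] f_def by simp
  have "inj_on f ?F"
  proof (rule inj_onI)
    fix A B assume A: "A \<in> ?F" and B: "B \<in> ?F" and eq: "f A = f B"
    show "A = B" using dj f[OF A] f[OF B] eq A B unfolding disj_def by auto
  qed
  moreover have "f ` ?F \<subseteq> set_pmf \<nu>" using f by auto
  ultimately show ?thesis using inj_on_finite fin by blast
qed

lemma sum_pos_eq_1:
  assumes fin: "finite (set_pmf \<nu>)" and dj: "disj \<C>" and cv: "covers \<C>"
  shows "(\<Sum>C\<in>{C\<in>\<C>. measure_pmf.prob \<nu> C \<noteq> 0}. measure_pmf.prob \<nu> C) = 1"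
proof -
  let ?F = "{C\<in>\<C>. measure_pmf.prob \<nu> C \<noteq> 0}"
  have finF: "finite ?F" by (rule finite_pos[OF fin dj])
  have "measure_pmf.prob \<nu> (\<Union>C\<in>?F. id C) = (\<Sum>C\<in>?F. measure_pmf.prob \<nu> (id C))"
  proof (rule measure_pmf.finite_measure_finite_Union[OF finF])
    show "id ` ?F \<subseteq> measure_pmf.events \<nu>" by simp
    show "disjoint_family_on id ?F"
      unfolding disjoint_family_on_def using dj unfolding disj_def by auto
  qed
  moreover have "measure_pmf.prob \<nu> (\<Union>C\<in>?F. id C) = 1"
  proof -
    have "set_pmf \<nu> \<subseteq> (\<Union>C\<in>?F. id C)"
    proof
      fix z assume z: "z \<in> set_pmf \<nu>"
      obtain C where C: "C \<in> \<C>" "z \<in> C" using cv unfolding covers_def by blast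
      have "measure_pmf.prob \<nu> C > 0" using measure_pmf_posI[OF z C(2)] .
      then show "z \<in> (\<Union>C\<in>?F. id C)" using C by auto
    qed
    then show ?thesis by (simp add: measure_pmf.prob_eq_1 AE_measure_pmf_iff subset_eq)
  qed
  ultimately show ?thesis by simp
qed

lemma entropy_lb:
  assumes fin: "finite (set_pmf \<nu>)" and dj: "disj \<C>" and cv: "covers \<C>" and q: "q > 0"
    and le: "\<And>C. C \<in> \<C> \<Longrightarrow> measure_pmf.prob \<nu> C \<le> q"
  shows "entropy_part \<nu> \<C> \<ge> - log 2 q"
proof -
  let ?F = "{C\<in>\<C>. measure_pmf.prob \<nu> C \<noteq> 0}"
  have "entropy_part \<nu> \<C> = (\<Sum>C\<in>?F. measure_pmf.prob \<nu> C * (- log 2 (measure_pmf.prob \<nu> C)))"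
    unfolding entropy_part_def by (simp add: sum_negf[symmetric])
  also have "\<dots> \<ge> (\<Sum>C\<in>?F. measure_pmf.prob \<nu> C * (- log 2 q))"
  proof (rule sum_mono)
    fix C assume C: "C \<in> ?F"
    then have p: "measure_pmf.prob \<nu> C > 0" using measure_nonneg[of "measure_pmf \<nu>" C]
      by (simp add: less_le)
    have "log 2 (measure_pmf.prob \<nu> C) \<le> log 2 q" using le[of C] C p by (intro log_mono) auto
    then show "measure_pmf.prob \<nu> C * (- log 2 q) \<le> measure_pmf.prob \<nu> C * (- log 2 (measure_pmf.prob \<nu> C))"
      using p by (intro mult_left_mono) auto
  qed
  also have "(\<Sum>C\<in>?F. measure_pmf.prob \<nu> C * (- log 2 q)) = - log 2 q"
    using sum_pos_eq_1[OF fin dj cv] by (simp only: sum_distrib_right[symmetric])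
  finally show ?thesis .
qed

lemma entropy_nonneg: "entropy_part \<nu> \<C> \<ge> 0"
proof -
  have "entropy_part \<nu> \<C> = (\<Sum>C\<in>{C\<in>\<C>. measure_pmf.prob \<nu> C \<noteq> 0}. - (measure_pmf.prob \<nu> C * log 2 (measure_pmf.prob \<nu> C)))"
    unfolding entropy_part_def by (simp add: sum_negf)
  also have "\<dots> \<ge> 0"
  proof (rule sum_nonneg)
    fix C assume "C \<in> {C\<in>\<C>. measure_pmf.prob \<nu> C \<noteq> 0}"
    then have p: "measure_pmf.prob \<nu> C > 0" using measure_nonneg[of "measure_pmf \<nu>" C]
      by (simp add: less_le)
    have "measure_pmf.prob \<nu> C \<le> 1" by simp
    then have "log 2 (measure_pmf.prob \<nu> C) \<le> 0" using p by simp
    then show "0 \<le> - (measure_pmf.prob \<nu> C * log 2 (measure_pmf.prob \<nu> C))"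
      using p by (simp add: mult_nonneg_nonpos)
  qed
  finally show ?thesis .
qed

lemma prob_cond_pmf:
  assumes fin: "finite (set_pmf \<mu>)" and ne: "set_pmf \<mu> \<inter> D \<noteq> {}"
  shows "measure_pmf.prob (cond_pmf \<mu> D) C = measure_pmf.prob \<mu> (C \<inter> D) / measure_pmf.prob \<mu> D"
proof -
  have "measure_pmf.prob (cond_pmf \<mu> D) C = measure_pmf.prob (cond_pmf \<mu> D) (C \<inter> set_pmf (cond_pmf \<mu> D))"
    by (simp add: measure_Int_set_pmf)
  also have "\<dots> = sum (pmf (cond_pmf \<mu> D)) (C \<inter> set_pmf (cond_pmf \<mu> D))"
    using fin ne by (intro measure_measure_pmf_finite) (simp add: set_cond_pmf)
  also have "\<dots> = sum (\<lambda>x. pmf \<mu> x / measure_pmf.prob \<mu> D) (C \<inter> D \<inter> set_pmf \<mu>)"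
    using ne by (intro sum.cong) (auto simp: pmf_cond set_cond_pmf)
  also have "\<dots> = sum (pmf \<mu>) (C \<inter> D \<inter> set_pmf \<mu>) / measure_pmf.prob \<mu> D"
    by (simp add: sum_divide_distrib)
  also have "sum (pmf \<mu>) (C \<inter> D \<inter> set_pmf \<mu>) = measure_pmf.prob \<mu> (C \<inter> D \<inter> set_pmf \<mu>)"
    using fin by (intro measure_measure_pmf_finite[symmetric]) auto
  also have "\<dots> = measure_pmf.prob \<mu> (C \<inter> D)" by (simp add: measure_Int_set_pmf)
  finally show ?thesis .
qed

lemma cond_entropy_lb:
  assumes fin: "finite (set_pmf \<mu>)" and dj: "disj \<D>" and h: "h \<ge> 0"
    and good: "\<And>z. z \<in> A \<Longrightarrow> z \<in> set_pmf \<mu> \<Longrightarrow> \<exists>D\<in>\<D>. z \<in> D \<and> entropy_part (cond_pmf \<mu> D) \<C> \<ge> h"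
  shows "cond_entropy_part \<mu> \<C> \<D> \<ge> h * measure_pmf.prob \<mu> A"
proof -
  let ?F = "{D\<in>\<D>. measure_pmf.prob \<mu> D \<noteq> 0}"
  let ?G = "{D\<in>?F. entropy_part (cond_pmf \<mu> D) \<C> \<ge> h}"
  have finF: "finite ?F" by (rule finite_pos[OF fin dj])
  have finG: "finite ?G" using finF by (rule rev_finite_subset) auto
  have "cond_entropy_part \<mu> \<C> \<D> \<ge> (\<Sum>D\<in>?G. measure_pmf.prob \<mu> D * entropy_part (cond_pmf \<mu> D) \<C>)"
    unfolding cond_entropy_part_def
    by (rule sum_mono2[OF finF]) (auto intro!: mult_nonneg_nonneg entropy_nonneg)
  moreover have "(\<Sum>D\<in>?G. measure_pmf.prob \<mu> D * entropy_part (cond_pmf \<mu> D) \<C>) \<ge> (\<Sum>D\<in>?G. measure_pmf.prob \<mu> D * h)"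
    by (rule sum_mono) (auto intro!: mult_left_mono)
  moreover have "(\<Sum>D\<in>?G. measure_pmf.prob \<mu> D * h) = h * measure_pmf.prob \<mu> (\<Union>D\<in>?G. id D)"
  proof -
    have "measure_pmf.prob \<mu> (\<Union>D\<in>?G. id D) = (\<Sum>D\<in>?G. measure_pmf.prob \<mu> (id D))"
    proof (rule measure_pmf.finite_measure_finite_Union[OF finG])
      show "id ` ?G \<subseteq> measure_pmf.events \<mu>" by simp
      show "disjoint_family_on id ?G"
        unfolding disjoint_family_on_def using dj unfolding disj_def by auto
    qed
    then show ?thesis by (simp add: sum_distrib_left mult.commute)
  qed
  moreover have "measure_pmf.prob \<mu> A \<le> measure_pmf.prob \<mu> (\<Union>D\<in>?G. id D)"
  proof -
    have "A \<inter> set_pmf \<mu> \<subseteq> (\<Union>D\<in>?G. id D)"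
    proof
      fix z assume z: "z \<in> A \<inter> set_pmf \<mu>"
      then obtain D where D: "D \<in> \<D>" "z \<in> D" "entropy_part (cond_pmf \<mu> D) \<C> \<ge> h" using good by blast
      have "measure_pmf.prob \<mu> D > 0" using measure_pmf_posI[of z \<mu> D] z D by auto
      then show "z \<in> (\<Union>D\<in>?G. id D)" using D by auto
    qed
    then have "measure_pmf.prob \<mu> (A \<inter> set_pmf \<mu>) \<le> measure_pmf.prob \<mu> (\<Union>D\<in>?G. id D)"
      by (intro measure_pmf.finite_measure_mono) auto
    then show ?thesis by (simp add: measure_Int_set_pmf)
  qed
  ultimately show ?thesis using h by (smt (verit) mult_left_mono)
qed

definition Pk :: "(nat \<Rightarrow> real) \<Rightarrow> (nat \<Rightarrow> real) \<Rightarrow> nat \<Rightarrow> nat \<Rightarrow> nat \<Rightarrow> real" where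
  "Pk x y k i = (\<lambda>t. real k * x t + real i * (y t - x t))"

lemma pmf_of_set_two:
  assumes "x \<noteq> y"
  shows "pmf_of_set {x, y} = map_pmf (\<lambda>b. if b then y else x) (bernoulli_pmf (1/2))"
proof -
  have "map_pmf (\<lambda>b. if b then y else x) (pmf_of_set (UNIV::bool set)) = pmf_of_set ((\<lambda>b. if b then y else x) ` UNIV)"
    using assms by (intro map_pmf_of_set_inj) (auto simp: inj_on_def)
  moreover have "(\<lambda>b. if b then y else x) ` UNIV = {x, y}" by (auto simp: UNIV_bool)
  ultimately show ?thesis by (simp add: bernoulli_pmf_half_conv_pmf_of_set)
qed

lemma conv_pow_binomial:
  assumes "x \<noteq> y"
  shows "conv_pow (pmf_of_set {x, y}) k = map_pmf (Pk x y k) (binomial_pmf k (1/2))"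
proof (induction k)
  case 0
  then show ?case by (simp add: binomial_pmf_0 Pk_def)
next
  case (Suc k)
  have "conv_pow (pmf_of_set {x, y}) (Suc k) =
     map_pmf (\<lambda>(a, b). \<lambda>i. a i + b i) (pair_pmf (map_pmf (\<lambda>b. if b then y else x) (bernoulli_pmf (1/2))) (map_pmf (Pk x y k) (binomial_pmf k (1/2))))"
    by (simp only: conv_pow.simps conv_pmf_def Suc.IH) (simp add: pmf_of_set_two[OF assms])
  also have "\<dots> = map_pmf (Pk x y (Suc k)) (binomial_pmf (Suc k) (1/2))"
    by (simp add: binomial_pmf_Suc pair_pmf_def map_pmf_def bind_assoc_pmf bind_return_pmf Pk_def
        algebra_simps fun_eq_iff; intro bind_pmf_cong refl; auto simp: fun_eq_iff)
  finally show ?case .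
qed

definition sc :: "(nat \<Rightarrow> real) \<Rightarrow> nat \<Rightarrow> int \<Rightarrow> real" where
  "sc lam t n = 2 powr (- real_of_int \<lfloor>chi lam t * real_of_int n\<rfloor>)"

definition key :: "(nat \<Rightarrow> real) \<Rightarrow> nat \<Rightarrow> int \<Rightarrow> (nat \<Rightarrow> real) \<Rightarrow> int" where
  "key lam t n z = \<lfloor>z t / sc lam t n\<rfloor>"

lemma sc_pos: "sc lam t n > 0" by (simp add: sc_def)

lemma floor_cell_iff:
  assumes s: "(s::real) > 0"
  shows "(real_of_int c * s \<le> u \<and> u < (real_of_int c + 1) * s) \<longleftrightarrow> \<lfloor>u / s\<rfloor> = c"
proof -
  have "(real_of_int c * s \<le> u) \<longleftrightarrow> real_of_int c \<le> u / s" using s by (simp add: pos_le_divide_eq)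
  moreover have "(u < (real_of_int c + 1) * s) \<longleftrightarrow> u / s < real_of_int c + 1" using s by (simp add: pos_divide_less_eq)
  ultimately show ?thesis by (simp add: floor_eq_iff)
qed

lemma dyadic_part_eq:
  "dyadic_part d lam n = {{v. \<forall>t\<in>{1..d}. key lam t n v = c t} | c :: nat \<Rightarrow> int. True}"
proof -
  have "\<And>c. {v. \<forall>i\<in>{1..d}. real_of_int (c i) * 2 powr (- real_of_int \<lfloor>chi lam i * real_of_int n\<rfloor>) \<le> v i
            \<and> v i < (real_of_int (c i) + 1) * 2 powr (- real_of_int \<lfloor>chi lam i * real_of_int n\<rfloor>)}
        = {v. \<forall>t\<in>{1..d}. key lam t n v = c t}"
    using floor_cell_iff[OF sc_pos] unfolding key_def sc_def by simp
  then show ?thesis unfolding dyadic_part_def by simp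
qed

lemma dyadic_mem:
  assumes "C \<in> dyadic_part d lam n" "z \<in> C"
  shows "z' \<in> C \<longleftrightarrow> (\<forall>t\<in>{1..d}. key lam t n z' = key lam t n z)"
  using assms unfolding dyadic_part_eq by auto

lemma dyadic_cover: "covers (dyadic_part d lam n)"
  unfolding covers_def dyadic_part_eq
proof
  fix z
  show "\<exists>A\<in>{{v. \<forall>t\<in>{1..d}. key lam t n v = c t} | c. True}. z \<in> A"
    by (rule bexI[of _ "{v. \<forall>t\<in>{1..d}. key lam t n v = key lam t n z}"]) auto
qed

lemma dyadic_disj: "disj (dyadic_part d lam n)"
  unfolding disj_def dyadic_part_eq by auto

lemma preimage_cover: "covers P \<Longrightarrow> covers (preimage_part J P)"
  unfolding covers_def preimage_part_def
proof (intro allI)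
  fix z assume "\<forall>z. \<exists>A\<in>P. z \<in> A"
  then obtain E where "E \<in> P" "proj J z \<in> E" by blast
  then show "\<exists>A\<in>{proj J -` E |E. E \<in> P}. z \<in> A" by blast
qed

lemma preimage_disj: "disj P \<Longrightarrow> disj (preimage_part J P)"
  unfolding disj_def preimage_part_def by auto

lemma join_cover: "covers P \<Longrightarrow> covers Q \<Longrightarrow> covers (join P Q)"
  unfolding covers_def join_def
proof (intro allI)
  fix z assume "\<forall>z. \<exists>A\<in>P. z \<in> A" "\<forall>z. \<exists>A\<in>Q. z \<in> A"
  then obtain C D where "C \<in> P" "z \<in> C" "D \<in> Q" "z \<in> D" by blast
  then show "\<exists>A\<in>{C \<inter> D |C D. C \<in> P \<and> D \<in> Q \<and> C \<inter> D \<noteq> {}}. z \<in> A" by blast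
qed

lemma join_disj: "disj P \<Longrightarrow> disj Q \<Longrightarrow> disj (join P Q)"
  unfolding disj_def join_def by auto

abbreviation bb :: "nat \<Rightarrow> nat \<Rightarrow> real" where "bb k i \<equiv> pmf (binomial_pmf k (1/2)) i"

lemma bb_eq: "bb k i = real (k choose i) / 2 ^ k"
proof (cases "i \<le> k")
  case True
  have "(1/2::real) ^ i * (1/2) ^ (k - i) = (1/2) ^ (i + (k - i))" by (simp add: power_add)
  also have "i + (k - i) = k" using True by simp
  finally show ?thesis by (simp add: power_divide)
next
  case False then show ?thesis by (simp add: binomial_eq_0)
qed

declare pmf_binomial[simp del]

lemma choose_step: "i < k \<Longrightarrow> real (k choose Suc i) * real (Suc i) = real (k choose i) * (real k - real i)"
proof -
  assume "i < k"
  then obtain n where n: "k = Suc n" by (cases k) auto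
  have "Suc i * (Suc n choose Suc i) = Suc n * (n choose i)" by (rule Suc_times_binomial)
  moreover have "(Suc n - i) * (Suc n choose i) = Suc n * (n choose i)"
    using binomial_absorb_comp[of "Suc n" i] by simp
  ultimately have "(k choose Suc i) * Suc i = (k choose i) * (k - i)" using n by (simp add: mult.commute)
  then have "real ((k choose Suc i) * Suc i) = real ((k choose i) * (k - i))" by simp
  then show ?thesis using \<open>i < k\<close> by (simp add: of_nat_diff algebra_simps)
qed

lemma bb_step: "i < k \<Longrightarrow> bb k (Suc i) * real (Suc i) = bb k i * (real k - real i)"
  using choose_step[of i k] by (simp add: bb_eq field_simps del: of_nat_Suc)

lemma bb_nonneg: "bb k i \<ge> 0" by simp

lemma bb_chain:
  fixes T :: real
  assumes T: "0 \<le> T" "T < real k / 2"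
  shows "real k / 2 - T \<le> real i \<Longrightarrow> real (i + L) \<le> real k / 2 + T \<Longrightarrow>
      bb k (i + L) \<ge> ((real k / 2 - T) / (real k / 2 + T)) ^ L * bb k i \<and>
      bb k i \<ge> ((real k / 2 - T) / (real k / 2 + T)) ^ L * bb k (i + L)"
proof (induction L)
  case 0
  then show ?case by simp
next
  case (Suc L)
  define r where "r = (real k / 2 - T) / (real k / 2 + T)"
  have r0: "0 \<le> r" "r \<le> 1" using T by (auto simp: r_def divide_le_eq_1)
  have IH: "bb k (i + L) \<ge> r ^ L * bb k i \<and> bb k i \<ge> r ^ L * bb k (i + L)"
    using Suc by (simp add: r_def)
  let ?j = "i + L"
  have jk: "?j < k" using Suc.prems T by simp
  have st: "bb k (Suc ?j) * real (Suc ?j) = bb k ?j * (real k - real ?j)" by (rule bb_step[OF jk])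
  have pos: "real k / 2 + T > 0" using T by simp
  have a1: "bb k (Suc ?j) \<ge> r * bb k ?j"
  proof -
    have "r * real (Suc ?j) \<le> real k - real ?j"
    proof -
      have "r * real (Suc ?j) \<le> r * (real k / 2 + T)" using Suc.prems r0 by (intro mult_left_mono) auto
      also have "\<dots> = real k / 2 - T" using pos by (simp add: r_def)
      also have "\<dots> \<le> real k - real ?j" using Suc.prems by simp
      finally show ?thesis .
    qed
    then have "r * bb k ?j * real (Suc ?j) \<le> bb k (Suc ?j) * real (Suc ?j)"
      using st by (smt (verit, ccfv_SIG) bb_nonneg mult.assoc mult.commute mult_left_mono)
    then show ?thesis by (simp add: mult_le_cancel_right)
  qed
  have a2: "bb k ?j \<ge> r * bb k (Suc ?j)"
  proof -
    have "r * (real k - real ?j) \<le> real (Suc ?j)"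
    proof -
      have "real k - real ?j \<le> real k / 2 + T" using Suc.prems by simp
      then have "r * (real k - real ?j) \<le> r * (real k / 2 + T)" using r0 by (intro mult_left_mono) auto
      also have "\<dots> = real k / 2 - T" using pos by (simp add: r_def)
      also have "\<dots> \<le> real (Suc ?j)" using Suc.prems by simp
      finally show ?thesis .
    qed
    moreover have "real k - real ?j > 0" using jk by simp
    ultimately have "r * bb k (Suc ?j) * (real k - real ?j) \<le> bb k ?j * (real k - real ?j)"
      using st by (smt (verit, ccfv_SIG) bb_nonneg mult.assoc mult.commute mult_left_mono)
    then show ?thesis using \<open>real k - real ?j > 0\<close> by (simp add: mult_le_cancel_right)
  qed
  have "bb k (i + Suc L) \<ge> r ^ Suc L * bb k i"
  proof -
    have "r ^ Suc L * bb k i = r * (r ^ L * bb k i)" by simp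
    also have "\<dots> \<le> r * bb k ?j" using IH r0 by (intro mult_left_mono) auto
    also have "\<dots> \<le> bb k (Suc ?j)" using a1 .
    finally show ?thesis by simp
  qed
  moreover have "bb k i \<ge> r ^ Suc L * bb k (i + Suc L)"
  proof -
    have "r ^ Suc L * bb k (i + Suc L) = r ^ L * (r * bb k (Suc ?j))" by simp
    also have "\<dots> \<le> r ^ L * bb k ?j" using a2 r0 by (intro mult_left_mono) auto
    also have "\<dots> \<le> bb k i" using IH by simp
    finally show ?thesis .
  qed
  ultimately show ?case by (simp add: r_def)
qed

lemma bb_close:
  fixes T L :: real
  assumes k: "k > 0" and T: "0 \<le> T" "T < real k / 2"
    and i: "\<bar>real i - real k / 2\<bar> \<le> T" and i': "\<bar>real i' - real k / 2\<bar> \<le> T"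
    and d: "\<bar>real i - real i'\<bar> \<le> L"
  shows "bb k i' \<ge> (1 - 4 * T * L / real k) * bb k i"
proof -
  define r where "r = (real k / 2 - T) / (real k / 2 + T)"
  have r0: "0 \<le> r" "r \<le> 1" using T by (auto simp: r_def divide_le_eq_1)
  have pos: "real k / 2 + T > 0" using T by simp
  have r1: "1 - r \<le> 4 * T / real k"
  proof -
    have "1 - r = 2 * T / (real k / 2 + T)" using pos by (simp add: r_def field_simps)
    also have "\<dots> \<le> 2 * T / (real k / 2)" using T k by (intro divide_left_mono) auto
    finally show ?thesis by simp
  qed
  define n where "n = (if i \<le> i' then i' - i else i - i')"
  have n: "real n = \<bar>real i - real i'\<bar>" by (simp add: n_def of_nat_diff)
  have ch: "bb k i' \<ge> r ^ n * bb k i"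
  proof (cases "i \<le> i'")
    case True
    then have "i' = i + n" by (simp add: n_def)
    then show ?thesis using bb_chain[OF T, of i n] i i' by (simp add: r_def)
  next
    case False
    then have "i = i' + n" by (simp add: n_def)
    then show ?thesis using bb_chain[OF T, of i' n] i i' by (simp add: r_def)
  qed
  have "1 + real n * (r - 1) = 1 - real n * (1 - r)" by (simp add: algebra_simps)
  then have "r ^ n \<ge> 1 - real n * (1 - r)"
    using Bernoulli_inequality[of "r - 1" n] r0 by simp
  moreover have "real n * (1 - r) \<le> L * (4 * T / real k)"
    using n d r0 r1 T k by (intro mult_mono) auto
  moreover have "L * (4 * T / real k) = 4 * T * L / real k" by simp
  ultimately have "r ^ n \<ge> 1 - 4 * T * L / real k" by linarith
  then have "(1 - 4 * T * L / real k) * bb k i \<le> r ^ n * bb k i" by (intro mult_right_mono) auto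
  then show ?thesis using ch by simp
qed

lemma bb_max:
  fixes T :: real
  assumes k: "k > 0" and T: "0 < T" "T < real k / 2" "real k \<le> 8 * T\<^sup>2"
    and i: "\<bar>real i - real k / 2\<bar> \<le> T"
  shows "bb k i \<le> 16 * T / real k"
proof -
  define M where "M = nat \<lfloor>real k / (8 * T)\<rfloor>"
  have kpos: "real k > 0" using k by simp
  have M1: "real M \<le> real k / (8 * T)" using T kpos unfolding M_def
    by (simp add: of_nat_nat)
  have z0: "real k / (8 * T) \<ge> 0" using T kpos by simp
  then have Mz: "real M = real_of_int \<lfloor>real k / (8 * T)\<rfloor>" unfolding M_def by simp
  have M2: "real M + 1 > real k / (8 * T)" unfolding Mz by linarith
  have "real k / (8 * T) \<le> T" using T by (simp add: divide_le_eq power2_eq_square mult.commute)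
  then have MT: "real M \<le> T" using M1 by simp
  have half: "1 - 4 * T * real M / real k \<ge> 1/2"
  proof -
    have "4 * T * real M \<le> 4 * T * (real k / (8 * T))" using M1 T by (intro mult_left_mono) auto
    also have "\<dots> = real k / 2" using T by simp
    finally show ?thesis using kpos by (simp add: field_simps)
  qed
  define S where "S = (if real i \<le> real k / 2 then {i..i+M} else {i-M..i})"
  have Mi: "real k / 2 < real i \<Longrightarrow> M \<le> i" using MT T by simp
  have cardS: "card S = M + 1" using Mi by (auto simp: S_def)
  have inS: "\<bar>real i' - real k / 2\<bar> \<le> T \<and> \<bar>real i - real i'\<bar> \<le> real M" if "i' \<in> S" for i'
    using that i MT Mi by (auto simp: S_def split: if_splits)
  have lb: "bb k i' \<ge> bb k i / 2" if "i' \<in> S" for i'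
  proof -
    have "bb k i' \<ge> (1 - 4 * T * real M / real k) * bb k i"
      using inS[OF that] by (intro bb_close[OF k less_imp_le[OF T(1)] T(2) i]) auto
    moreover have "(1 - 4 * T * real M / real k) * bb k i \<ge> (1/2) * bb k i"
      using half by (intro mult_right_mono) auto
    ultimately show ?thesis by simp
  qed
  have "real (M + 1) * (bb k i / 2) \<le> sum (bb k) S"
    using sum_mono[of S "\<lambda>_. bb k i / 2" "bb k", OF lb] cardS by simp
  also have "sum (bb k) S = measure_pmf.prob (binomial_pmf k (1/2)) S"
    by (rule measure_measure_pmf_finite[symmetric]) (simp add: S_def)
  also have "\<dots> \<le> 1" by simp
  finally have "(real M + 1) * bb k i \<le> 2" by (simp add: add.commute)
  then have "bb k i \<le> 2 / (real M + 1)" by (simp add: field_simps)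
  also have "\<dots> \<le> 2 / (real k / (8 * T))" using M2 kpos T by (intro divide_left_mono) auto
  also have "\<dots> = 16 * T / real k" using T by (simp add: field_simps)
  finally show ?thesis .
qed

lemma fin_bounded: "finite {i::nat. P i \<and> real i \<le> (h::real)}"
proof (rule finite_subset[of _ "{..nat \<lceil>h\<rceil>}"])
  show "{i::nat. P i \<and> real i \<le> h} \<subseteq> {..nat \<lceil>h\<rceil>}"
  proof
    fix i assume "i \<in> {i::nat. P i \<and> real i \<le> h}"
    then have "real i \<le> h" by simp
    then have "real i \<le> of_int \<lceil>h\<rceil>" using le_of_int_ceiling[of h] by linarith
    then have "int i \<le> \<lceil>h\<rceil>" by linarith
    then show "i \<in> {..nat \<lceil>h\<rceil>}" by simp
  qed
qed simp

lemma card_nat_le: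
  fixes lo hi :: real
  assumes "lo \<le> hi"
  shows "real (card {i::nat. lo \<le> real i \<and> real i \<le> hi}) \<le> hi - lo + 1"
proof (cases "hi < 0")
  case True
  then have e: "{i::nat. lo \<le> real i \<and> real i \<le> hi} = {}" by auto
  show ?thesis by (simp only: e card.empty) (use assms in simp)
next
  case False
  have sub: "{i::nat. lo \<le> real i \<and> real i \<le> hi} \<subseteq> {nat \<lceil>lo\<rceil> .. nat \<lfloor>hi\<rfloor>}"
  proof
    fix i assume "i \<in> {i::nat. lo \<le> real i \<and> real i \<le> hi}"
    then have "lo \<le> real i" "real i \<le> hi" by auto
    then have "\<lceil>lo\<rceil> \<le> int i" "int i \<le> \<lfloor>hi\<rfloor>" by (simp_all add: ceiling_le_iff le_floor_iff)
    then have a: "nat \<lceil>lo\<rceil> \<le> i" and b: "i \<le> nat \<lfloor>hi\<rfloor>" by linarith+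
    show "i \<in> {nat \<lceil>lo\<rceil> .. nat \<lfloor>hi\<rfloor>}" using a b by (simp only: atLeastAtMost_iff simp_thms)
  qed
  have "card {i::nat. lo \<le> real i \<and> real i \<le> hi} \<le> card {nat \<lceil>lo\<rceil> .. nat \<lfloor>hi\<rfloor>}"
    by (rule card_mono[OF _ sub]) simp
  also have "\<dots> = Suc (nat \<lfloor>hi\<rfloor>) - nat \<lceil>lo\<rceil>" by simp
  finally have c: "real (card {i::nat. lo \<le> real i \<and> real i \<le> hi}) \<le> real (Suc (nat \<lfloor>hi\<rfloor>) - nat \<lceil>lo\<rceil>)"
    by linarith
  have "real (Suc (nat \<lfloor>hi\<rfloor>) - nat \<lceil>lo\<rceil>) \<le> hi - lo + 1"
  proof (cases "nat \<lceil>lo\<rceil> \<le> Suc (nat \<lfloor>hi\<rfloor>)")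
    case True
    then have "real (Suc (nat \<lfloor>hi\<rfloor>) - nat \<lceil>lo\<rceil>) = real (nat \<lfloor>hi\<rfloor>) + 1 - real (nat \<lceil>lo\<rceil>)"
      by (simp add: of_nat_diff)
    moreover have "real (nat \<lfloor>hi\<rfloor>) \<le> hi" using False by simp
    moreover have "real (nat \<lceil>lo\<rceil>) \<ge> lo"
    proof (cases "lo \<le> 0")
      case True then show ?thesis by (smt (verit) of_nat_0_le_iff)
    next
      case False then have "\<lceil>lo\<rceil> \<ge> 0" by linarith
      then have "real (nat \<lceil>lo\<rceil>) = of_int \<lceil>lo\<rceil>" by simp
      then show ?thesis using le_of_int_ceiling[of lo] by linarith
    qed
    ultimately show ?thesis by linarith
  next
    case False
    then have "Suc (nat \<lfloor>hi\<rfloor>) \<le> nat \<lceil>lo\<rceil>" by linarith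
    then have "Suc (nat \<lfloor>hi\<rfloor>) - nat \<lceil>lo\<rceil> = 0" by (rule diff_is_0_eq')
    then show ?thesis using assms by simp
  qed
  with c show ?thesis by linarith
qed

lemma card_nat_ge:
  fixes lo hi :: real
  assumes "0 \<le> lo"
  shows "real (card {i::nat. lo < real i \<and> real i < hi}) \<ge> hi - lo - 1"
proof (cases "hi \<le> lo + 1")
  case True
  then show ?thesis by simp
next
  case False
  have eq: "{i::nat. lo < real i \<and> real i < hi} = {Suc (nat \<lfloor>lo\<rfloor>) ..< nat \<lceil>hi\<rceil>}"
  proof (intro set_eqI iffI)
    fix i assume "i \<in> {i::nat. lo < real i \<and> real i < hi}"
    then have "lo < real i" "real i < hi" by auto
    then have "\<lfloor>lo\<rfloor> < int i" "int i < \<lceil>hi\<rceil>" by (auto simp: floor_less_iff less_ceiling_iff)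
    moreover have "\<lfloor>lo\<rfloor> \<ge> 0" using assms by simp
    ultimately have "nat \<lfloor>lo\<rfloor> < i" "i < nat \<lceil>hi\<rceil>" by linarith+
    then show "i \<in> {Suc (nat \<lfloor>lo\<rfloor>) ..< nat \<lceil>hi\<rceil>}" by auto
  next
    fix i assume "i \<in> {Suc (nat \<lfloor>lo\<rfloor>) ..< nat \<lceil>hi\<rceil>}"
    then have "\<lfloor>lo\<rfloor> < int i" "int i < \<lceil>hi\<rceil>" using assms by auto
    then show "i \<in> {i::nat. lo < real i \<and> real i < hi}" by (auto simp: floor_less_iff less_ceiling_iff)
  qed
  have c0: "\<lceil>hi\<rceil> \<ge> 0" using False assms by linarith
  have f0: "\<lfloor>lo\<rfloor> \<ge> 0" using assms by simp
  have h1: "real (nat \<lceil>hi\<rceil>) = of_int \<lceil>hi\<rceil>" using c0 by simp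
  have h2: "real (nat \<lfloor>lo\<rfloor>) = of_int \<lfloor>lo\<rfloor>" using f0 by simp
  have "of_int \<lfloor>lo\<rfloor> + 1 < (of_int \<lceil>hi\<rceil> :: real)"
    using of_int_floor_le[of lo] le_of_int_ceiling[of hi] False by linarith
  then have "\<lfloor>lo\<rfloor> + 1 < \<lceil>hi\<rceil>" by linarith
  then have le: "Suc (nat \<lfloor>lo\<rfloor>) \<le> nat \<lceil>hi\<rceil>" using f0 c0 by linarith
  have "real (card {Suc (nat \<lfloor>lo\<rfloor>) ..< nat \<lceil>hi\<rceil>}) = real (nat \<lceil>hi\<rceil>) - real (nat \<lfloor>lo\<rfloor>) - 1"
    using le by (simp add: of_nat_diff)
  also have "\<dots> \<ge> hi - lo - 1" unfolding h1 h2 using of_int_floor_le[of lo] le_of_int_ceiling[of hi] by linarith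
  finally show ?thesis unfolding eq .
qed

lemma lin_interval:
  fixes \<alpha> \<beta> a b :: real
  assumes "\<beta> \<noteq> 0" "a \<le> b"
  shows "\<exists>lo. (\<forall>r. a \<le> \<alpha> + r * \<beta> \<and> \<alpha> + r * \<beta> < b \<longrightarrow> lo \<le> r \<and> r \<le> lo + (b - a) / \<bar>\<beta>\<bar>)
          \<and> (\<forall>r. lo < r \<and> r < lo + (b - a) / \<bar>\<beta>\<bar> \<longrightarrow> a \<le> \<alpha> + r * \<beta> \<and> \<alpha> + r * \<beta> < b)"
proof (cases "\<beta> > 0")
  case True
  have ab: "(b - a) / \<bar>\<beta>\<bar> = (b - \<alpha>) / \<beta> - (a - \<alpha>) / \<beta>" using True by (simp add: diff_divide_distrib)
  show ?thesis unfolding ab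
  proof (rule exI[of _ "(a - \<alpha>) / \<beta>"], rule conjI; intro allI impI)
    fix r assume "a \<le> \<alpha> + r * \<beta> \<and> \<alpha> + r * \<beta> < b"
    then show "(a - \<alpha>) / \<beta> \<le> r \<and> r \<le> (a - \<alpha>) / \<beta> + ((b - \<alpha>) / \<beta> - (a - \<alpha>) / \<beta>)"
      using True by (simp add: pos_divide_le_eq pos_le_divide_eq)
  next
    fix r assume "(a - \<alpha>) / \<beta> < r \<and> r < (a - \<alpha>) / \<beta> + ((b - \<alpha>) / \<beta> - (a - \<alpha>) / \<beta>)"
    then show "a \<le> \<alpha> + r * \<beta> \<and> \<alpha> + r * \<beta> < b"
      using True by (simp add: pos_divide_less_eq pos_less_divide_eq)
  qed
next
  case False
  then have neg: "\<beta> < 0" using assms by simp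
  have ab: "(b - a) / \<bar>\<beta>\<bar> = (a - \<alpha>) / \<beta> - (b - \<alpha>) / \<beta>" using neg by (simp add: diff_divide_distrib)
  show ?thesis unfolding ab
  proof (rule exI[of _ "(b - \<alpha>) / \<beta>"], rule conjI; intro allI impI)
    fix r assume "a \<le> \<alpha> + r * \<beta> \<and> \<alpha> + r * \<beta> < b"
    then show "(b - \<alpha>) / \<beta> \<le> r \<and> r \<le> (b - \<alpha>) / \<beta> + ((a - \<alpha>) / \<beta> - (b - \<alpha>) / \<beta>)"
      using neg by (simp add: neg_divide_le_eq neg_le_divide_eq)
  next
    fix r assume "(b - \<alpha>) / \<beta> < r \<and> r < (b - \<alpha>) / \<beta> + ((a - \<alpha>) / \<beta> - (b - \<alpha>) / \<beta>)"
    then show "a \<le> \<alpha> + r * \<beta> \<and> \<alpha> + r * \<beta> < b"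
      using neg by (simp add: neg_divide_less_eq neg_less_divide_eq)
  qed
qed

lemma card_lin_abs:
  fixes \<alpha> \<beta> z c :: real
  assumes "\<beta> \<noteq> 0" "c \<ge> 0"
  shows "real (card {i::nat. \<bar>\<alpha> + real i * \<beta> - z\<bar> \<le> c}) \<le> 2 * c / \<bar>\<beta>\<bar> + 1"
proof -
  define lo where "lo = (z - \<alpha>) / \<beta> - c / \<bar>\<beta>\<bar>"
  have sub: "{i::nat. \<bar>\<alpha> + real i * \<beta> - z\<bar> \<le> c} \<subseteq> {i::nat. lo \<le> real i \<and> real i \<le> lo + 2 * c / \<bar>\<beta>\<bar>}"
  proof
    fix i assume "i \<in> {i::nat. \<bar>\<alpha> + real i * \<beta> - z\<bar> \<le> c}"
    then have h: "\<bar>\<alpha> + real i * \<beta> - z\<bar> \<le> c" by simp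
    have e: "(\<alpha> + real i * \<beta> - z) / \<beta> = real i - (z - \<alpha>) / \<beta>" using assms(1) by (simp add: field_simps)
    have "\<bar>real i - (z - \<alpha>) / \<beta>\<bar> = \<bar>\<alpha> + real i * \<beta> - z\<bar> / \<bar>\<beta>\<bar>"
      by (simp only: e[symmetric] abs_divide)
    also have "\<dots> \<le> c / \<bar>\<beta>\<bar>" using h assms by (simp add: divide_right_mono)
    finally show "i \<in> {i::nat. lo \<le> real i \<and> real i \<le> lo + 2 * c / \<bar>\<beta>\<bar>}"
      unfolding lo_def by (auto simp: abs_le_iff)
  qed
  have fin: "finite {i::nat. lo \<le> real i \<and> real i \<le> lo + 2 * c / \<bar>\<beta>\<bar>}"
    using fin_bounded[of "\<lambda>i. lo \<le> real i"] by simp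
  have "card {i::nat. \<bar>\<alpha> + real i * \<beta> - z\<bar> \<le> c} \<le> card {i::nat. lo \<le> real i \<and> real i \<le> lo + 2 * c / \<bar>\<beta>\<bar>}"
    by (rule card_mono[OF fin sub])
  moreover have "real (card {i::nat. lo \<le> real i \<and> real i \<le> lo + 2 * c / \<bar>\<beta>\<bar>}) \<le> 2 * c / \<bar>\<beta>\<bar> + 1"
    using card_nat_le[of lo "lo + 2 * c / \<bar>\<beta>\<bar>"] assms by simp
  ultimately show ?thesis by linarith
qed

declare pmf_binomial[simp del]

lemma aux_cancel: "(s::real) \<noteq> 1 \<Longrightarrow> c * (a * (1 - s) * (1 - s)) * (b / (1 - s)) = c * (a * ((1 - s) * b))"
  by (simp add: field_simps)

lemma sc_mono: "chi lam t > 0 \<Longrightarrow> n \<le> n' \<Longrightarrow> sc lam t n' \<le> sc lam t n"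
  unfolding sc_def by (intro powr_mono) (auto intro!: floor_mono mult_left_mono)

lemma key_P: "key lam t e (Pk x y k i) = \<lfloor>(real k * x t + real i * (y t - x t)) / sc lam t e\<rfloor>"
  by (simp add: key_def Pk_def)

lemma prob_B_restrict:
  "measure_pmf.prob (binomial_pmf k (1/2)) A = measure_pmf.prob (binomial_pmf k (1/2)) (A \<inter> {..k})"
  using measure_Int_set_pmf[of "binomial_pmf k (1/2)" A] by simp

lemma prob_B_sum:
  "A \<subseteq> {..k} \<Longrightarrow> measure_pmf.prob (binomial_pmf k (1/2)) A = sum (bb k) A"
  by (rule measure_measure_pmf_finite) (auto intro: finite_subset)

locale est =
  fixes d j :: nat and lam x y :: "nat \<Rightarrow> real" and k :: nat and n n' :: int and T0 :: real
  assumes j: "j \<in> {1..d}" and chipos: "\<forall>t\<in>{1..d}. chi lam t > 0"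
    and nn': "n \<le> n'"
    and vj: "y j \<noteq> x j"
    and k: "k > 0" and T0: "0 < T0" "T0 < real k / 2" "real k \<le> 8 * T0\<^sup>2"
    and Lw: "sc lam j n / \<bar>y j - x j\<bar> \<le> T0 / 2"
    and s': "4 * T0 * (sc lam j n / \<bar>y j - x j\<bar>) / real k \<le> 1/10"
    and u: "sc lam j n' / \<bar>y j - x j\<bar> \<ge> 19"
    and span: "\<forall>t\<in>{1..d}-{j}. 2 * T0 * \<bar>y t - x t\<bar> < sc lam t n'"
begin

abbreviation "W \<equiv> sc lam j n"
abbreviation "w \<equiv> sc lam j n'"
abbreviation "Lw \<equiv> W / \<bar>y j - x j\<bar>"
abbreviation "P \<equiv> Pk x y k"
abbreviation "B \<equiv> binomial_pmf k (1/2)"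

definition good :: "nat \<Rightarrow> bool" where
  "good i \<longleftrightarrow> i \<le> k \<and> \<bar>real i - real k / 2\<bar> \<le> T0 - Lw \<and>
     (\<forall>t\<in>{1..d}-{j}. \<forall>e\<in>{n,n'}. \<forall>i'\<le>k. \<bar>real i' - real i\<bar> \<le> Lw \<longrightarrow> key lam t e (P i') = key lam t e (P i))"

lemma Lw_pos: "Lw > 0" using vj sc_pos[of lam j n] by simp

lemma W_ge_w: "w \<le> W" using sc_mono[of lam j n n'] chipos j nn' by auto

lemma cell_bound:
  assumes g: "good i"
    and D: "D \<in> join (dyadic_part d lam n) (preimage_part ({1..d}-{j}) (dyadic_part d lam n'))"
    and PD: "P i \<in> D"
    and C: "C \<in> dyadic_part d lam n'"
  shows "measure_pmf.prob B (P -` (C \<inter> D)) \<le> (2 * w / W) * measure_pmf.prob B (P -` D)"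
proof -
  let ?J' = "{1..d}-{j}"
  obtain C1 C2 where D12: "D = C1 \<inter> C2" and C1: "C1 \<in> dyadic_part d lam n"
    and C2: "C2 \<in> preimage_part ?J' (dyadic_part d lam n')"
    using D unfolding join_def by blast
  obtain E where C2E: "C2 = proj ?J' -` E" and E: "E \<in> dyadic_part d lam n'"
    using C2 unfolding preimage_part_def by blast
  have ik: "i \<le> k" and ic: "\<bar>real i - real k / 2\<bar> \<le> T0 - Lw" using g by (auto simp: good_def)
  define \<kappa>1 where "\<kappa>1 = key lam j n (P i)"
  define v where "v = y j - x j"
  have v0: "v \<noteq> 0" using vj by (simp add: v_def)
  have Wpos: "W > 0" by (rule sc_pos)
  have keyj: "key lam j e (P i') = c \<longleftrightarrow> real_of_int c * sc lam j e \<le> real k * x j + real i' * v \<and> real k * x j + real i' * v < (real_of_int c + 1) * sc lam j e" for i' e c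
    using floor_cell_iff[OF sc_pos[of lam j e], of c "real k * x j + real i' * v"]
    by (simp add: key_P v_def)
  obtain lo where lo1: "\<And>r. real_of_int \<kappa>1 * W \<le> real k * x j + r * v \<and> real k * x j + r * v < (real_of_int \<kappa>1 + 1) * W \<Longrightarrow> lo \<le> r \<and> r \<le> lo + ((real_of_int \<kappa>1 + 1) * W - real_of_int \<kappa>1 * W) / \<bar>v\<bar>"
    and lo2: "\<And>r. lo < r \<and> r < lo + ((real_of_int \<kappa>1 + 1) * W - real_of_int \<kappa>1 * W) / \<bar>v\<bar> \<Longrightarrow> real_of_int \<kappa>1 * W \<le> real k * x j + r * v \<and> real k * x j + r * v < (real_of_int \<kappa>1 + 1) * W"
    using lin_interval[OF v0, of "real_of_int \<kappa>1 * W" "(real_of_int \<kappa>1 + 1) * W" "real k * x j"] Wpos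
    by (auto simp: algebra_simps)
  have len: "((real_of_int \<kappa>1 + 1) * W - real_of_int \<kappa>1 * W) / \<bar>v\<bar> = Lw" by (simp add: v_def algebra_simps)
  define J where "J = {i'. i' \<le> k \<and> key lam j n (P i') = \<kappa>1}"
  have Jint: "lo \<le> real i' \<and> real i' \<le> lo + Lw" if "i' \<in> J" for i'
    using that lo1[of "real i'"] keyj[where i'=i' and e=n and c=\<kappa>1] unfolding J_def len by auto
  have iJ: "i \<in> J" using ik by (simp add: J_def \<kappa>1_def)
  have Jclose: "\<bar>real i' - real i\<bar> \<le> Lw" if "i' \<in> J" for i'
    using Jint[OF that] Jint[OF iJ] by linarith
  have Jcent: "\<bar>real i' - real k / 2\<bar> \<le> T0" if "i' \<in> J" for i'
    using Jclose[OF that] ic by linarith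
  have lo0: "lo \<ge> 0" using Jint[OF iJ] ic Lw_pos T0 by linarith
  have lok: "lo + Lw \<le> real k" using Jint[OF iJ] ic T0 by linarith
  have JD: "P i' \<in> D" if "i' \<in> J" for i'
  proof -
    have i'k: "i' \<le> k" and kj: "key lam j n (P i') = key lam j n (P i)" using that by (auto simp: J_def \<kappa>1_def)
    have oth: "key lam t e (P i') = key lam t e (P i)" if "t \<in> ?J'" "e \<in> {n, n'}" for t e
      using g that i'k Jclose[OF \<open>i' \<in> J\<close>] unfolding good_def by blast
    have "P i \<in> C1" using PD D12 by simp
    moreover have "\<forall>t\<in>{1..d}. key lam t n (P i') = key lam t n (P i)"
      using kj oth by (metis DiffI insertI1 singletonD)
    ultimately have "P i' \<in> C1" using dyadic_mem[OF C1] by blast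
    moreover have "proj ?J' (P i) \<in> E" using PD D12 C2E by simp
    moreover have "\<forall>t\<in>{1..d}. key lam t n' (proj ?J' (P i')) = key lam t n' (proj ?J' (P i))"
    proof
      fix t assume t: "t \<in> {1..d}"
      show "key lam t n' (proj ?J' (P i')) = key lam t n' (proj ?J' (P i))"
      proof (cases "t \<in> ?J'")
        case True then show ?thesis using oth[of t n'] by (simp add: key_def proj_def)
      next
        case False then show ?thesis by (auto simp: key_def proj_def)
      qed
    qed
    ultimately have "proj ?J' (P i') \<in> E" using dyadic_mem[OF E] by blast
    then show ?thesis using \<open>P i' \<in> C1\<close> D12 C2E by simp
  qed
  have Dkey: "key lam j n (P i') = \<kappa>1" if "P i' \<in> D" for i'
  proof -
    have "P i \<in> C1" "P i' \<in> C1" using PD that D12 by auto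
    then show ?thesis using dyadic_mem[OF C1] j unfolding \<kappa>1_def by blast
  qed
  have finJ: "finite J" by (rule finite_subset[of _ "{..k}"]) (auto simp: J_def)
  have Jsub: "J \<subseteq> {..k}" by (auto simp: J_def)
  define s where "s = 4 * T0 * Lw / real k"
  have s0: "0 \<le> s" unfolding s_def using T0 Lw_pos Wpos
    by (intro divide_nonneg_nonneg mult_nonneg_nonneg) auto
  have s1: "s \<le> 1/10" using s' unfolding s_def .
  note s = s0 s1
  have bbJ1: "bb k i' \<ge> (1 - s) * bb k i" if "i' \<in> J" for i'
    unfolding s_def using Jclose[OF that] Jcent[OF that] Jcent[OF iJ]
    by (intro bb_close[OF k less_imp_le[OF T0(1)] T0(2)]) auto
  have bbJ2: "bb k i \<ge> (1 - s) * bb k i'" if "i' \<in> J" for i'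
    unfolding s_def using Jclose[OF that] Jcent[OF that] Jcent[OF iJ]
    by (intro bb_close[OF k less_imp_le[OF T0(1)] T0(2)]) auto
  have bbi: "bb k i > 0" using ik by (simp add: pmf_positive_iff set_pmf_binomial_eq)
  have cardJ: "real (card J) \<ge> Lw - 1"
  proof -
    have sub: "{i'::nat. lo < real i' \<and> real i' < lo + Lw} \<subseteq> J"
    proof
      fix i' assume "i' \<in> {i'::nat. lo < real i' \<and> real i' < lo + Lw}"
      then have h: "lo < real i'" "real i' < lo + Lw" by auto
      then have "real i' \<le> real k" using lok by linarith
      then have "i' \<le> k" by simp
      moreover have "key lam j n (P i') = \<kappa>1" using lo2[of "real i'"] h keyj[where i'=i' and e=n and c=\<kappa>1] unfolding len by auto
      ultimately show "i' \<in> J" by (simp add: J_def)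
    qed
    have "real (card {i'::nat. lo < real i' \<and> real i' < lo + Lw}) \<ge> lo + Lw - lo - 1"
      by (rule card_nat_ge[OF lo0])
    moreover have "card {i'::nat. lo < real i' \<and> real i' < lo + Lw} \<le> card J" by (rule card_mono[OF finJ sub])
    ultimately show ?thesis by linarith
  qed
  have massD: "measure_pmf.prob B (P -` D) \<ge> real (card J) * ((1 - s) * bb k i)"
  proof -
    have "measure_pmf.prob B J \<le> measure_pmf.prob B (P -` D)"
      using JD by (intro measure_pmf.finite_measure_mono) auto
    moreover have "measure_pmf.prob B J = sum (bb k) J" by (rule prob_B_sum[OF Jsub])
    moreover have "sum (bb k) J \<ge> sum (\<lambda>_. (1 - s) * bb k i) J" by (rule sum_mono) (rule bbJ1)
    ultimately show ?thesis by simp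
  qed
  show ?thesis
  proof (cases "P -` (C \<inter> D) \<inter> {..k} = {}")
    case True
    then have "measure_pmf.prob B (P -` (C \<inter> D)) = 0" using prob_B_restrict[of k "P -` (C \<inter> D)"] by simp
    moreover have "0 \<le> (2 * w / W) * measure_pmf.prob B (P -` D)" using Wpos sc_pos[of lam j n'] by simp
    ultimately show ?thesis by simp
  next
    case False
    then obtain i0 where i0: "i0 \<le> k" "P i0 \<in> C" "P i0 \<in> D" by auto
    define \<kappa>2 where "\<kappa>2 = key lam j n' (P i0)"
    define K where "K = {i' \<in> J. key lam j n' (P i') = \<kappa>2}"
    have CDK: "P -` (C \<inter> D) \<inter> {..k} \<subseteq> K"
    proof
      fix i' assume h: "i' \<in> P -` (C \<inter> D) \<inter> {..k}"
      then have "key lam j n' (P i') = \<kappa>2" using dyadic_mem[OF C i0(2)] j unfolding \<kappa>2_def by auto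
      moreover have "i' \<in> J" using h Dkey by (auto simp: J_def)
      ultimately show "i' \<in> K" by (simp add: K_def)
    qed
    have finK: "finite K" using finJ by (simp add: K_def)
    have Ksub: "K \<subseteq> {..k}" using Jsub by (auto simp: K_def)
    have cardK: "real (card K) \<le> w / \<bar>v\<bar> + 1"
    proof -
      have wpos: "w > 0" by (rule sc_pos)
      obtain lo' where lo': "\<And>r. real_of_int \<kappa>2 * w \<le> real k * x j + r * v \<and> real k * x j + r * v < (real_of_int \<kappa>2 + 1) * w \<Longrightarrow> lo' \<le> r \<and> r \<le> lo' + ((real_of_int \<kappa>2 + 1) * w - real_of_int \<kappa>2 * w) / \<bar>v\<bar>"
        using lin_interval[OF v0, of "real_of_int \<kappa>2 * w" "(real_of_int \<kappa>2 + 1) * w" "real k * x j"] wpos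
        by (auto simp: algebra_simps)
      have len2: "((real_of_int \<kappa>2 + 1) * w - real_of_int \<kappa>2 * w) / \<bar>v\<bar> = w / \<bar>v\<bar>" by (simp add: algebra_simps)
      have sub: "K \<subseteq> {i'::nat. lo' \<le> real i' \<and> real i' \<le> lo' + w / \<bar>v\<bar>}"
      proof
        fix i' assume "i' \<in> K"
        then have "key lam j n' (P i') = \<kappa>2" by (simp add: K_def)
        then show "i' \<in> {i'::nat. lo' \<le> real i' \<and> real i' \<le> lo' + w / \<bar>v\<bar>}"
          using lo'[of "real i'"] keyj[where i'=i' and e=n' and c=\<kappa>2] unfolding len2 by auto
      qed
      have "card K \<le> card {i'::nat. lo' \<le> real i' \<and> real i' \<le> lo' + w / \<bar>v\<bar>}"
        by (rule card_mono[OF _ sub]) (use fin_bounded[of "\<lambda>i'. lo' \<le> real i'"] in simp)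
      moreover have "real (card {i'::nat. lo' \<le> real i' \<and> real i' \<le> lo' + w / \<bar>v\<bar>}) \<le> w / \<bar>v\<bar> + 1"
        using card_nat_le[of lo' "lo' + w / \<bar>v\<bar>"] wpos by simp
      ultimately show ?thesis by linarith
    qed
    have massCD: "measure_pmf.prob B (P -` (C \<inter> D)) \<le> real (card K) * (bb k i / (1 - s))"
    proof -
      have "measure_pmf.prob B (P -` (C \<inter> D)) = measure_pmf.prob B (P -` (C \<inter> D) \<inter> {..k})"
        by (rule prob_B_restrict)
      also have "\<dots> \<le> measure_pmf.prob B K" using CDK by (intro measure_pmf.finite_measure_mono) auto
      also have "\<dots> = sum (bb k) K" by (rule prob_B_sum[OF Ksub])
      also have "\<dots> \<le> sum (\<lambda>_. bb k i / (1 - s)) K"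
      proof (rule sum_mono)
        fix i' assume "i' \<in> K"
        then have "i' \<in> J" by (simp add: K_def)
        then have "bb k i \<ge> (1 - s) * bb k i'" by (rule bbJ2)
        then show "bb k i' \<le> bb k i / (1 - s)" using s by (simp add: field_simps)
      qed
      finally show ?thesis by simp
    qed
    define U where "U = w / \<bar>v\<bar>"
    have U: "U \<ge> 19" using u by (simp add: U_def v_def)
    have LwU: "Lw = (W / w) * U" using sc_pos[of lam j n'] by (simp add: U_def v_def)
    have N1: "W / w \<ge> 1" using W_ge_w sc_pos[of lam j n'] by simp
    have h9: "9/10 \<le> 1 - s" using s by simp
    have s2: "(1 - s) * (1 - s) \<ge> 81/100" using mult_mono[OF h9 h9] s by simp
    have key_ineq: "real (card K) \<le> (2 * w / W) * (real (card J) * (1 - s) * (1 - s))"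
    proof -
      have wpos: "w > 0" by (rule sc_pos)
      have e1: "(W / w) * (U - 1) = Lw - W / w" using LwU by (simp add: right_diff_distrib)
      have cJ: "real (card J) \<ge> (W / w) * (U - 1)" using cardJ N1 e1 by linarith
      have "(2 * w / W) * real (card J) \<ge> (2 * w / W) * ((W / w) * (U - 1))"
        using cJ wpos Wpos by (intro mult_left_mono) auto
      moreover have "(2 * w / W) * ((W / w) * (U - 1)) = 2 * (U - 1)" using wpos Wpos by (simp add: field_simps)
      ultimately have A: "2 * (U - 1) \<le> (2 * w / W) * real (card J)" by simp
      have F: "2 * (U - 1) * (81/100) \<le> (2 * w / W) * real (card J) * ((1 - s) * (1 - s))"
        using mult_mono[OF A s2] U A by (simp del: divide_const_simps)
      have eqZ: "(2 * w / W) * real (card J) * ((1 - s) * (1 - s)) = (2 * w / W) * (real (card J) * (1 - s) * (1 - s))"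
        by (simp only: mult.assoc)
      define Z where "Z = (2 * w / W) * (real (card J) * (1 - s) * (1 - s))"
      have F2: "2 * (U - 1) * (81/100) \<le> Z" using F eqZ unfolding Z_def by simp
      have "real (card K) \<le> U + 1" using cardK by (simp add: U_def)
      have F3: "81/50 * U - 81/50 \<le> Z" using F2 by (simp add: algebra_simps)
      then have "real (card K) \<le> Z" using F3 U \<open>real (card K) \<le> U + 1\<close> by linarith
      then show ?thesis unfolding Z_def .
    qed
    have "measure_pmf.prob B (P -` (C \<inter> D)) \<le> real (card K) * (bb k i / (1 - s))" by (rule massCD)
    also have "\<dots> \<le> (2 * w / W) * (real (card J) * (1 - s) * (1 - s)) * (bb k i / (1 - s))"
      using key_ineq bbi s by (intro mult_right_mono) auto
    also have "\<dots> = (2 * w / W) * (real (card J) * ((1 - s) * bb k i))" using s by (intro aux_cancel) simp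
    also have "\<dots> \<le> (2 * w / W) * measure_pmf.prob B (P -` D)"
      using massD Wpos sc_pos[of lam j n'] by (intro mult_left_mono) auto
    finally show ?thesis .
  qed
qed

end

declare pmf_binomial[simp del]

lemma mul_le_div: "0 < c \<Longrightarrow> a * c \<le> b \<Longrightarrow> a \<le> b / (c::real)"
  by (simp add: pos_le_divide_eq)

lemma floor_between:
  fixes a b :: real
  assumes "\<lfloor>a\<rfloor> \<noteq> \<lfloor>b\<rfloor>"
  shows "min a b < real_of_int (max \<lfloor>a\<rfloor> \<lfloor>b\<rfloor>) \<and> real_of_int (max \<lfloor>a\<rfloor> \<lfloor>b\<rfloor>) \<le> max a b"
proof (cases "\<lfloor>a\<rfloor> < \<lfloor>b\<rfloor>")
  case True
  then have "a < real_of_int \<lfloor>b\<rfloor>" by (meson floor_less_iff)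
  then show ?thesis using True by (simp add: max_def min_def) (smt (verit) of_int_floor_le)
next
  case False
  then have "\<lfloor>b\<rfloor> < \<lfloor>a\<rfloor>" using assms by simp
  then have "b < real_of_int \<lfloor>a\<rfloor>" by (meson floor_less_iff)
  then show ?thesis using \<open>\<lfloor>b\<rfloor> < \<lfloor>a\<rfloor>\<close> by (simp add: max_def min_def) (smt (verit) of_int_floor_le)
qed

lemma floor_cross_unique:
  fixes a b c e :: real
  assumes "\<lfloor>a\<rfloor> \<noteq> \<lfloor>b\<rfloor>" "\<lfloor>c\<rfloor> \<noteq> \<lfloor>e\<rfloor>"
    and "\<bar>a - c\<bar> < 1" "\<bar>a - e\<bar> < 1" "\<bar>b - c\<bar> < 1" "\<bar>b - e\<bar> < 1"
  shows "max \<lfloor>a\<rfloor> \<lfloor>b\<rfloor> = max \<lfloor>c\<rfloor> \<lfloor>e\<rfloor>"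
proof -
  define z0 where "z0 = max \<lfloor>a\<rfloor> \<lfloor>b\<rfloor>"
  define z1 where "z1 = max \<lfloor>c\<rfloor> \<lfloor>e\<rfloor>"
  have h0: "min a b < real_of_int z0" "real_of_int z0 \<le> max a b" using floor_between[OF assms(1)] z0_def by auto
  have h1: "min c e < real_of_int z1" "real_of_int z1 \<le> max c e" using floor_between[OF assms(2)] z1_def by auto
  have "real_of_int z0 - real_of_int z1 < 1" using h0 h1 assms(3-6) by (auto simp: min_def max_def abs_less_iff split: if_splits)
  moreover have "real_of_int z1 - real_of_int z0 < 1" using h0 h1 assms(3-6) by (auto simp: min_def max_def abs_less_iff split: if_splits)
  ultimately have "z0 - z1 < 1" "z1 - z0 < 1" by linarith+
  then have "z0 = z1" by linarith
  then show ?thesis by (simp add: z0_def z1_def)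
qed

context est
begin

lemma S_bound:
  assumes t: "t \<in> {1..d}-{j}" and e: "e \<in> {n, n'}"
  shows "measure_pmf.prob B {i. i \<le> k \<and> \<bar>real i - real k / 2\<bar> \<le> T0 \<and>
      (\<exists>i'\<le>k. \<bar>real i' - real k / 2\<bar> \<le> T0 \<and> \<bar>real i' - real i\<bar> \<le> Lw \<and> key lam t e (P i') \<noteq> key lam t e (P i))}
      \<le> (2 * Lw + 1) * (16 * T0 / real k)"
    (is "measure_pmf.prob B ?S \<le> _")
proof -
  have tpos: "chi lam t > 0" using chipos t by auto
  have sce: "sc lam t n' \<le> sc lam t e" using e sc_mono[OF tpos nn'] by auto
  define vt where "vt = y t - x t"
  define sce where "sce = sc lam t e"
  have scpos: "sce > 0" unfolding sce_def by (rule sc_pos)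
  have "2 * T0 * \<bar>y t - x t\<bar> < sc lam t n'" using span t by blast
  then have spant: "2 * T0 * \<bar>vt\<bar> < sce" using sce unfolding vt_def sce_def by linarith
  define X where "X r = (real k * x t + r * vt) / sce" for r
  have keyX: "key lam t e (P i) = \<lfloor>X (real i)\<rfloor>" for i by (simp add: key_P X_def vt_def sce_def)
  have Xdiff: "\<bar>X p - X q\<bar> < 1" if "\<bar>p - real k / 2\<bar> \<le> T0" "\<bar>q - real k / 2\<bar> \<le> T0" for p q
  proof -
    have "X p - X q = (p - q) * vt / sce" by (simp add: X_def diff_divide_distrib[symmetric] algebra_simps)
    then have "\<bar>X p - X q\<bar> = \<bar>p - q\<bar> * \<bar>vt\<bar> / sce" using scpos by (simp add: abs_mult)
    also have "\<dots> \<le> (2 * T0) * \<bar>vt\<bar> / sce" using that scpos by (intro divide_right_mono mult_right_mono) auto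
    also have "\<dots> < 1" using spant scpos by simp
    finally show ?thesis .
  qed
  have bbS: "bb k i \<le> 16 * T0 / real k" if "i \<in> ?S" for i
    using that by (intro bb_max[OF k T0]) auto
  have finS: "finite ?S" by (rule finite_subset[of _ "{..k}"]) auto
  have "real (card ?S) \<le> 2 * Lw + 1"
  proof (cases "?S = {}")
    case True
    have "real (card ?S) = 0" by (simp only: True card.empty of_nat_0)
    then show ?thesis using Lw_pos by linarith
  next
    case False
    then obtain i0 i0' where i0: "i0 \<le> k" "\<bar>real i0 - real k / 2\<bar> \<le> T0" "i0' \<le> k" "\<bar>real i0' - real k / 2\<bar> \<le> T0"
      "\<lfloor>X (real i0')\<rfloor> \<noteq> \<lfloor>X (real i0)\<rfloor>" unfolding keyX by blast
    have vt0: "vt \<noteq> 0" using i0(5) unfolding X_def by auto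
    define z0 where "z0 = max \<lfloor>X (real i0')\<rfloor> \<lfloor>X (real i0)\<rfloor>"
    have sub: "?S \<subseteq> {i::nat. \<bar>real k * x t / sce + real i * (vt / sce) - real_of_int z0\<bar> \<le> Lw * \<bar>vt / sce\<bar>}"
    proof
      fix i assume "i \<in> ?S"
      then obtain i' where h: "i \<le> k" "\<bar>real i - real k / 2\<bar> \<le> T0" "i' \<le> k" "\<bar>real i' - real k / 2\<bar> \<le> T0"
        "\<bar>real i' - real i\<bar> \<le> Lw" "\<lfloor>X (real i')\<rfloor> \<noteq> \<lfloor>X (real i)\<rfloor>" unfolding keyX by blast
      have zeq: "z0 = max \<lfloor>X (real i')\<rfloor> \<lfloor>X (real i)\<rfloor>" unfolding z0_def
        by (rule floor_cross_unique[OF i0(5) h(6)]) (intro Xdiff; fact)+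
      have btw: "min (X (real i')) (X (real i)) < real_of_int z0 \<and> real_of_int z0 \<le> max (X (real i')) (X (real i))"
        unfolding zeq by (rule floor_between[OF h(6)])
      have "\<bar>X (real i) - real_of_int z0\<bar> \<le> \<bar>X (real i) - X (real i')\<bar>" using btw
        by (auto simp: min_def max_def split: if_splits)
      also have "X (real i) - X (real i') = (real i - real i') * (vt / sce)" by (simp add: X_def diff_divide_distrib[symmetric] algebra_simps)
      also have "\<bar>(real i - real i') * (vt / sce)\<bar> \<le> Lw * \<bar>vt / sce\<bar>"
      proof -
        have "\<bar>(real i - real i') * (vt / sce)\<bar> = \<bar>real i' - real i\<bar> * \<bar>vt / sce\<bar>"
          by (simp only: abs_mult abs_minus_commute)
        also have "\<dots> \<le> Lw * \<bar>vt / sce\<bar>" using h(5) by (rule mult_right_mono) simp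
        finally show ?thesis .
      qed
      finally have "\<bar>X (real i) - real_of_int z0\<bar> \<le> Lw * \<bar>vt / sce\<bar>" .
      moreover have "X (real i) = real k * x t / sce + real i * (vt / sce)" by (simp add: X_def add_divide_distrib)
      ultimately show "i \<in> {i::nat. \<bar>real k * x t / sce + real i * (vt / sce) - real_of_int z0\<bar> \<le> Lw * \<bar>vt / sce\<bar>}" by simp
    qed
    have vs: "vt / sce \<noteq> 0" using vt0 scpos by simp
    have fin2: "finite {i::nat. \<bar>real k * x t / sce + real i * (vt / sce) - real_of_int z0\<bar> \<le> Lw * \<bar>vt / sce\<bar>}"
    proof (rule finite_subset[OF _ fin_bounded[of "\<lambda>_. True" "(Lw * \<bar>vt / sce\<bar> + \<bar>real_of_int z0 - real k * x t / sce\<bar>) / \<bar>vt / sce\<bar>"]])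
      show "{i::nat. \<bar>real k * x t / sce + real i * (vt / sce) - real_of_int z0\<bar> \<le> Lw * \<bar>vt / sce\<bar>}
          \<subseteq> {i. True \<and> real i \<le> (Lw * \<bar>vt / sce\<bar> + \<bar>real_of_int z0 - real k * x t / sce\<bar>) / \<bar>vt / sce\<bar>}"
      proof
        fix i assume "i \<in> {i::nat. \<bar>real k * x t / sce + real i * (vt / sce) - real_of_int z0\<bar> \<le> Lw * \<bar>vt / sce\<bar>}"
        then have hh: "\<bar>real k * x t / sce + real i * (vt / sce) - real_of_int z0\<bar> \<le> Lw * \<bar>vt / sce\<bar>" by simp
        have "real i * \<bar>vt / sce\<bar> = \<bar>real i * (vt / sce)\<bar>" by (simp add: abs_mult)
        also have "\<dots> \<le> \<bar>real k * x t / sce + real i * (vt / sce) - real_of_int z0\<bar> + \<bar>real_of_int z0 - real k * x t / sce\<bar>"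
        proof -
          have "real i * (vt / sce) = (real k * x t / sce + real i * (vt / sce) - real_of_int z0) + (real_of_int z0 - real k * x t / sce)" by simp
          then show ?thesis by (metis abs_triangle_ineq)
        qed
        also have "\<dots> \<le> Lw * \<bar>vt / sce\<bar> + \<bar>real_of_int z0 - real k * x t / sce\<bar>" using hh by linarith
        finally have "real i * \<bar>vt / sce\<bar> \<le> Lw * \<bar>vt / sce\<bar> + \<bar>real_of_int z0 - real k * x t / sce\<bar>" .
        then show "i \<in> {i. True \<and> real i \<le> (Lw * \<bar>vt / sce\<bar> + \<bar>real_of_int z0 - real k * x t / sce\<bar>) / \<bar>vt / sce\<bar>}"
          using mul_le_div[of "\<bar>vt / sce\<bar>"] vs by simp
      qed
    qed
    have "card ?S \<le> card {i::nat. \<bar>real k * x t / sce + real i * (vt / sce) - real_of_int z0\<bar> \<le> Lw * \<bar>vt / sce\<bar>}"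
      by (rule card_mono[OF _ sub]) (rule fin2)
    moreover have "real (card {i::nat. \<bar>real k * x t / sce + real i * (vt / sce) - real_of_int z0\<bar> \<le> Lw * \<bar>vt / sce\<bar>}) \<le> 2 * (Lw * \<bar>vt / sce\<bar>) / \<bar>vt / sce\<bar> + 1"
      using Lw_pos sc_pos[of lam j n] by (intro card_lin_abs[OF vs] mult_nonneg_nonneg) auto
    moreover have "2 * (Lw * \<bar>vt / sce\<bar>) / \<bar>vt / sce\<bar> = 2 * Lw" using vs by simp
    ultimately show ?thesis by linarith
  qed
  have "measure_pmf.prob B ?S = sum (bb k) ?S" by (rule prob_B_sum) auto
  also have "\<dots> \<le> sum (\<lambda>_. 16 * T0 / real k) ?S" by (rule sum_mono) (rule bbS)
  also have "\<dots> = real (card ?S) * (16 * T0 / real k)" by simp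
  also have "\<dots> \<le> (2 * Lw + 1) * (16 * T0 / real k)"
    using \<open>real (card ?S) \<le> 2 * Lw + 1\<close> T0 k by (intro mult_right_mono) auto
  finally show ?thesis .
qed

end

declare pmf_binomial[simp del]

context est
begin

lemma bad_bound:
  "measure_pmf.prob B {i. \<not> good i} \<le> 2 * exp (- 2 * (T0/2)\<^sup>2 / real k) + 2 * real (d - 1) * ((2 * Lw + 1) * (16 * T0 / real k))"
proof -
  define S where "S p = {i. i \<le> k \<and> \<bar>real i - real k / 2\<bar> \<le> T0 \<and>
      (\<exists>i'\<le>k. \<bar>real i' - real k / 2\<bar> \<le> T0 \<and> \<bar>real i' - real i\<bar> \<le> Lw \<and> key lam (fst p) (snd p) (P i') \<noteq> key lam (fst p) (snd p) (P i))}" for p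
  define I where "I = ({1..d}-{j}) \<times> {n, n'}"
  define Tail where "Tail = {i::nat. T0/2 \<le> \<bar>real i - real k * (1/2)\<bar>}"
  have finI: "finite I" by (simp add: I_def)
  have sub: "{i. \<not> good i} \<inter> {..k} \<subseteq> Tail \<union> (\<Union>p\<in>I. S p)"
  proof
    fix i assume "i \<in> {i. \<not> good i} \<inter> {..k}"
    then have ng: "\<not> good i" and ik: "i \<le> k" by auto
    show "i \<in> Tail \<union> (\<Union>p\<in>I. S p)"
    proof (cases "\<bar>real i - real k / 2\<bar> \<le> T0 - Lw")
      case False
      then have "i \<in> Tail" using Lw by (simp add: Tail_def)
      then show ?thesis by simp
    next
      case True
      then obtain t e i' where te: "t \<in> {1..d}-{j}" "e \<in> {n, n'}" "i' \<le> k" "\<bar>real i' - real i\<bar> \<le> Lw"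
        "key lam t e (P i') \<noteq> key lam t e (P i)" using ng ik unfolding good_def by blast
      have "\<bar>real i - real k / 2\<bar> \<le> T0" using True Lw_pos by linarith
      moreover have "\<bar>real i' - real k / 2\<bar> \<le> T0" using True te(4) by linarith
      ultimately have "i \<in> S (t, e)" using te ik unfolding S_def by auto
      moreover have "(t, e) \<in> I" using te by (simp add: I_def)
      ultimately show ?thesis by blast
    qed
  qed
  have "measure_pmf.prob B {i. \<not> good i} = measure_pmf.prob B ({i. \<not> good i} \<inter> {..k})"
    by (rule prob_B_restrict)
  also have "\<dots> \<le> measure_pmf.prob B (Tail \<union> (\<Union>p\<in>I. S p))"
    using sub by (intro measure_pmf.finite_measure_mono) auto
  also have "\<dots> \<le> measure_pmf.prob B Tail + measure_pmf.prob B (\<Union>p\<in>I. S p)"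
    by (rule measure_Un_le) auto
  also have "measure_pmf.prob B (\<Union>p\<in>I. S p) \<le> (\<Sum>p\<in>I. measure_pmf.prob B (S p))"
    using finI by (intro measure_pmf.finite_measure_subadditive_finite) auto
  also have "(\<Sum>p\<in>I. measure_pmf.prob B (S p)) \<le> (\<Sum>p\<in>I. (2 * Lw + 1) * (16 * T0 / real k))"
  proof (rule sum_mono)
    fix p assume "p \<in> I"
    then show "measure_pmf.prob B (S p) \<le> (2 * Lw + 1) * (16 * T0 / real k)"
      unfolding S_def I_def using S_bound[of "fst p" "snd p"] by (cases p) auto
  qed
  also have "(\<Sum>p\<in>I. (2 * Lw + 1) * (16 * T0 / real k)) \<le> 2 * real (d - 1) * ((2 * Lw + 1) * (16 * T0 / real k))"
  proof -
    have "card I \<le> (d - 1) * 2"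
    proof -
      have "card I = card ({1..d}-{j}) * card {n, n'}" by (simp add: I_def card_cartesian_product)
      moreover have "card ({1..d}-{j}) = d - 1" using j by simp
      moreover have "card {n, n'} \<le> 2" by (simp add: card_insert_le_m1)
      ultimately show ?thesis by simp
    qed
    then have A: "real (card I) \<le> 2 * real (d - 1)" by (metis of_nat_le_iff of_nat_mult mult.commute of_nat_numeral)
    have B: "0 \<le> (2 * Lw + 1) * (16 * T0 / real k)" using Lw_pos T0 by simp
    show ?thesis unfolding sum_constant by (rule mult_right_mono[OF A B])
  qed
  also have "measure_pmf.prob B Tail \<le> 2 * exp (- 2 * (T0/2)\<^sup>2 / real k)"
  proof -
    interpret binomial_distribution k "1/2" by unfold_locales simp
    show ?thesis unfolding Tail_def using prob_abs_ge[of "T0/2"] k T0 by simp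
  qed
  finally show ?thesis by simp
qed

lemma log_ratio: "- log 2 (2 * w / W) = real_of_int (\<lfloor>chi lam j * real_of_int n'\<rfloor> - \<lfloor>chi lam j * real_of_int n\<rfloor>) - 1"
proof -
  have "w / W = 2 powr (real_of_int (\<lfloor>chi lam j * real_of_int n\<rfloor> - \<lfloor>chi lam j * real_of_int n'\<rfloor>))"
    unfolding sc_def by (simp add: powr_diff[symmetric])
  then have "2 * w / W = 2 powr (1 + real_of_int (\<lfloor>chi lam j * real_of_int n\<rfloor> - \<lfloor>chi lam j * real_of_int n'\<rfloor>))"
    by (simp add: powr_add)
  then show ?thesis by simp
qed

lemma main_est:
  assumes h: "h = real_of_int (\<lfloor>chi lam j * real_of_int n'\<rfloor> - \<lfloor>chi lam j * real_of_int n\<rfloor>) - 1" and h0: "h \<ge> 0"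
  shows "cond_entropy_part (conv_pow (pmf_of_set {x, y}) k) (dyadic_part d lam n')
            (join (dyadic_part d lam n) (preimage_part ({1..d}-{j}) (dyadic_part d lam n')))
         \<ge> h * (1 - (2 * exp (- 2 * (T0/2)\<^sup>2 / real k) + 2 * real (d - 1) * ((2 * Lw + 1) * (16 * T0 / real k))))"
proof -
  let ?C = "dyadic_part d lam n'"
  let ?D = "join (dyadic_part d lam n) (preimage_part ({1..d}-{j}) (dyadic_part d lam n'))"
  define \<mu> where "\<mu> = map_pmf P B"
  have xy: "x \<noteq> y" using vj by auto
  have mu: "conv_pow (pmf_of_set {x, y}) k = \<mu>" unfolding \<mu>_def by (rule conv_pow_binomial[OF xy])
  have finmu: "finite (set_pmf \<mu>)" unfolding \<mu>_def by (simp add: set_pmf_binomial_eq)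
  have djD: "disj ?D" by (intro join_disj preimage_disj dyadic_disj)
  have cvD: "covers ?D" by (intro join_cover preimage_cover dyadic_cover)
  have Wpos: "W > 0" "w > 0" by (simp_all add: sc_pos)
  have ent: "\<exists>D\<in>?D. z \<in> D \<and> entropy_part (cond_pmf \<mu> D) ?C \<ge> h"
    if z: "z \<in> P ` {i. good i}" "z \<in> set_pmf \<mu>" for z
  proof -
    obtain i where i: "good i" "z = P i" using z by auto
    obtain D where D: "D \<in> ?D" "z \<in> D" using cvD unfolding covers_def by blast
    have ne: "set_pmf \<mu> \<inter> D \<noteq> {}" using z D by auto
    have muD: "measure_pmf.prob \<mu> D > 0" using measure_pmf_posI[OF z(2) D(2)] .
    have "entropy_part (cond_pmf \<mu> D) ?C \<ge> - log 2 (2 * w / W)"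
    proof (rule entropy_lb)
      show "finite (set_pmf (cond_pmf \<mu> D))" using finmu ne by (simp add: set_cond_pmf)
      show "disj ?C" by (rule dyadic_disj)
      show "covers ?C" by (rule dyadic_cover)
      show "0 < 2 * w / W" using Wpos by simp
      fix C assume C: "C \<in> ?C"
      have "measure_pmf.prob \<mu> (C \<inter> D) \<le> (2 * w / W) * measure_pmf.prob \<mu> D"
        unfolding \<mu>_def using cell_bound[OF i(1) D(1) _ C] D(2) i(2) by simp
      then show "measure_pmf.prob (cond_pmf \<mu> D) C \<le> 2 * w / W"
        using muD by (simp add: prob_cond_pmf[OF finmu ne] pos_divide_le_eq)
    qed
    then show ?thesis using D log_ratio h by auto
  qed
  have "cond_entropy_part \<mu> ?C ?D \<ge> h * measure_pmf.prob \<mu> (P ` {i. good i})"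
    by (rule cond_entropy_lb[OF finmu djD h0]) (rule ent)
  moreover have "measure_pmf.prob \<mu> (P ` {i. good i}) \<ge> 1 - (2 * exp (- 2 * (T0/2)\<^sup>2 / real k) + 2 * real (d - 1) * ((2 * Lw + 1) * (16 * T0 / real k)))"
  proof -
    have "measure_pmf.prob \<mu> (P ` {i. good i}) = measure_pmf.prob B (P -` (P ` {i. good i}))" by (simp add: \<mu>_def)
    also have "\<dots> \<ge> measure_pmf.prob B {i. good i}" by (intro measure_pmf.finite_measure_mono) auto
    finally have a: "measure_pmf.prob \<mu> (P ` {i. good i}) \<ge> measure_pmf.prob B {i. good i}" .
    have "measure_pmf.prob B {i. good i} = 1 - measure_pmf.prob B {i. \<not> good i}"
      using measure_pmf.prob_compl[of "{i. \<not> good i}" B] by (simp add: Compl_eq_Diff_UNIV[symmetric] Collect_neg_eq[symmetric])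
    then show ?thesis using a bad_bound by linarith
  qed
  ultimately show ?thesis unfolding mu using h0 by (smt (verit) mult_left_mono)
qed

end

lemma two_powr_log_half: "k > 0 \<Longrightarrow> 2 powr (log 2 (real k) * c) = real k powr c"
  by (simp add: powr_powr[symmetric])

lemma scale_upper:
  fixes chi :: real and l k :: nat
  assumes chi: "chi > 0" and k: "k > 0"
  shows "2 powr (- real_of_int \<lfloor>chi * real_of_int (int l - \<lfloor>log 2 (real k) / (2 * chi)\<rfloor>)\<rfloor>) \<le> 2 powr (1 - chi * real l) * sqrt (real k)"
proof -
  define a where "a = \<lfloor>log 2 (real k) / (2 * chi)\<rfloor>"
  have "chi * real_of_int a \<le> chi * (log 2 (real k) / (2 * chi))" using chi unfolding a_def
    by (intro mult_left_mono) auto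
  also have "\<dots> = log 2 (real k) * (1/2)" using chi by simp
  finally have ca: "chi * real_of_int a \<le> log 2 (real k) * (1/2)" .
  have "- real_of_int \<lfloor>chi * real_of_int (int l - a)\<rfloor> \<le> 1 - chi * real_of_int (int l - a)"
    by linarith
  also have "\<dots> = 1 - chi * real l + chi * real_of_int a" by (simp add: algebra_simps)
  also have "\<dots> \<le> 1 - chi * real l + log 2 (real k) * (1/2)" using ca by simp
  finally have "2 powr (- real_of_int \<lfloor>chi * real_of_int (int l - a)\<rfloor>) \<le> 2 powr (1 - chi * real l + log 2 (real k) * (1/2))"
    by simp
  also have "\<dots> = 2 powr (1 - chi * real l) * 2 powr (log 2 (real k) * (1/2))" by (rule powr_add)
  also have "2 powr (log 2 (real k) * (1/2)) = real k powr (1/2)" by (rule two_powr_log_half[OF k])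
  also have "real k powr (1/2) = sqrt (real k)" by (simp add: powr_half_sqrt)
  finally show ?thesis unfolding a_def .
qed

lemma scale_lower:
  fixes chit chij :: real and l m k :: nat
  assumes chit: "chit > 0" and chij: "chij > 0" and k: "k > 0"
  shows "2 powr (- real_of_int \<lfloor>chit * real_of_int (int l - \<lfloor>log 2 (real k) / (2 * chij)\<rfloor> + int m)\<rfloor>)
     \<ge> 2 powr (- chit * (real l + real m + 1)) * real k powr (chit / (2 * chij))"
proof -
  define a where "a = \<lfloor>log 2 (real k) / (2 * chij)\<rfloor>"
  have "chit * real_of_int a \<ge> chit * (log 2 (real k) / (2 * chij) - 1)" using chit unfolding a_def
    by (intro mult_left_mono) linarith+
  then have ca: "chit * real_of_int a \<ge> log 2 (real k) * (chit / (2 * chij)) - chit" by (simp add: algebra_simps)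
  have "- real_of_int \<lfloor>chit * real_of_int (int l - a + int m)\<rfloor> \<ge> - (chit * real_of_int (int l - a + int m))"
    by linarith
  moreover have "- (chit * real_of_int (int l - a + int m)) = - chit * (real l + real m) + chit * real_of_int a"
    by (simp add: algebra_simps)
  ultimately have "- real_of_int \<lfloor>chit * real_of_int (int l - a + int m)\<rfloor> \<ge> - chit * (real l + real m + 1) + log 2 (real k) * (chit / (2 * chij))"
    using ca by (simp add: algebra_simps)
  then have "2 powr (- real_of_int \<lfloor>chit * real_of_int (int l - a + int m)\<rfloor>) \<ge> 2 powr (- chit * (real l + real m + 1) + log 2 (real k) * (chit / (2 * chij)))"
    by simp
  also have "2 powr (- chit * (real l + real m + 1) + log 2 (real k) * (chit / (2 * chij))) = 2 powr (- chit * (real l + real m + 1)) * 2 powr (log 2 (real k) * (chit / (2 * chij)))"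
    by (rule powr_add)
  also have "2 powr (log 2 (real k) * (chit / (2 * chij))) = real k powr (chit / (2 * chij))" by (rule two_powr_log_half[OF k])
  finally show ?thesis unfolding a_def .
qed

lemma ev_powr_gt:
  fixes e C :: real
  assumes "e > 0"
  shows "eventually (\<lambda>c::nat. C < real c powr e) sequentially"
proof -
  define N where "N = nat \<lceil>(max C 0 + 1) powr (1 / e)\<rceil>"
  show ?thesis unfolding eventually_sequentially
  proof (intro exI allI impI)
    fix c assume c: "N \<le> c"
    have "(max C 0 + 1) powr (1 / e) \<le> real c" using c unfolding N_def by linarith
    then have "((max C 0 + 1) powr (1 / e)) powr e \<le> real c powr e" using assms by (intro powr_mono2) auto
    moreover have "((max C 0 + 1) powr (1 / e)) powr e = max C 0 + 1" using assms by (simp add: powr_powr)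
    ultimately show "C < real c powr e" by linarith
  qed
qed

lemma ev_real_gt: "eventually (\<lambda>b::nat. C < real b) sequentially"
  unfolding eventually_sequentially
  by (rule exI[of _ "nat \<lceil>C\<rceil> + 1"]) (auto, linarith)

lemma ev_sqrt_gt: "eventually (\<lambda>c::nat. C < sqrt (real c)) sequentially"
  using ev_powr_gt[of "1/2" C] by (simp add: powr_half_sqrt)

lemma ev_two_powr_small:
  fixes chi c :: real
  assumes chi: "chi > 0" and c: "c > 0"
  shows "eventually (\<lambda>b::nat. 2 powr (1 - chi * real b) \<le> c) sequentially"
proof (rule eventually_mono[OF ev_real_gt[of "2 / (c * chi * ln 2)"]])
  fix b :: nat assume b: "2 / (c * chi * ln 2) < real b"
  have l2: "ln 2 > (0::real)" by simp
  have pos: "c * chi * ln 2 > 0" using c chi l2 by simp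
  have "2 < real b * (c * chi * ln 2)" using b pos by (simp add: divide_less_eq)
  then have "2 / c < chi * real b * ln 2" using c by (simp add: divide_less_eq algebra_simps)
  also have "\<dots> \<le> exp (chi * real b * ln 2)" using exp_ge_add_one_self[of "chi * real b * ln 2"] by linarith
  also have "exp (chi * real b * ln 2) = 2 powr (chi * real b)" by (simp add: powr_def)
  finally have h: "2 / c < 2 powr (chi * real b)" .
  have "2 powr (1 - chi * real b) = 2 / 2 powr (chi * real b)" by (simp add: powr_diff)
  also have "\<dots> \<le> c" using h c by (simp add: divide_le_eq mult.commute less_imp_le pos_divide_less_eq)
  finally show "2 powr (1 - chi * real b) \<le> c" .
qed

declare pmf_binomial[simp del]

lemma cond_entropy_nonneg: "cond_entropy_part \<mu> \<C> \<D> \<ge> 0"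
  unfolding cond_entropy_part_def by (intro sum_nonneg mult_nonneg_nonneg entropy_nonneg) auto

lemma aux_eq1: "(s::real) > 0 \<Longrightarrow> \<delta> \<noteq> 0 \<Longrightarrow>
   2 * dd * ((2 * (q * s / \<delta>) + 1) * (16 * (R * s) / (s * s))) = 64 * dd * R * q / \<delta> + 32 * dd * R / s"
  by (simp add: field_simps)

lemma step_j:
  fixes d j :: nat and lam x y :: "nat \<Rightarrow> real" and eps R \<delta> :: real and m l k :: nat
  assumes j: "j \<in> {1..d}" and chipos: "\<forall>t\<in>{1..d}. chi lam t > 0"
    and eps: "0 < eps"
    and R: "R \<ge> 1" and Rbad: "2 * exp (- R\<^sup>2 / 2) \<le> eps / (2 * chi lam j) / 3"
    and \<delta>: "\<delta> > 0" "\<delta> \<le> \<bar>y j - x j\<bar>" "\<bar>y j - x j\<bar> \<le> 1 / eps"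
    and m1: "real m > 4 / eps" and m2: "chi lam j * real m \<ge> 2"
    and l1: "2 powr (1 - chi lam j * real l) \<le> \<delta> / 2"
    and l2: "2 powr (1 - chi lam j * real l) \<le> \<delta> / (40 * R)"
    and l3: "2 powr (1 - chi lam j * real l) \<le> (eps / (2 * chi lam j)) * \<delta> / (192 * real d * R)"
    and k1: "k \<ge> 1" and k2: "2 * R < sqrt (real k)"
    and k3: "19 \<le> 2 powr (- chi lam j * (real l + real m + 1)) * sqrt (real k) * eps"
    and k4: "32 * real d * R / sqrt (real k) \<le> (eps / (2 * chi lam j)) / 3"
    and span: "\<forall>t\<in>{1..d}-{j}. 2 * (R * sqrt (real k)) * \<bar>y t - x t\<bar>
        < 2 powr (- chi lam t * (real l + real m + 1)) * real k powr (chi lam t / (2 * chi lam j))"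
  shows "1 / real m * cond_entropy_part (conv_pow (pmf_of_set {x, y}) k)
      (dyadic_part d lam (int l - \<lfloor>log 2 (real k) / (2 * chi lam j)\<rfloor> + int m))
      (join (dyadic_part d lam (int l - \<lfloor>log 2 (real k) / (2 * chi lam j)\<rfloor>))
        (preimage_part ({1..d}-{j}) (dyadic_part d lam (int l - \<lfloor>log 2 (real k) / (2 * chi lam j)\<rfloor> + int m))))
     > chi lam j - eps"
proof -
  define a where "a = \<lfloor>log 2 (real k) / (2 * chi lam j)\<rfloor>"
  define ch where "ch = chi lam j"
  define \<beta> where "\<beta> = eps / (2 * ch)"
  have ch: "ch > 0" using chipos j by (simp add: ch_def)
  have kpos: "k > 0" using k1 by simp
  have sk: "sqrt (real k) > 0" using kpos by simp
  have skk: "sqrt (real k) * sqrt (real k) = real k" by simp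
  define T0 where "T0 = R * sqrt (real k)"
  define v where "v = \<bar>y j - x j\<bar>"
  have vpos: "v > 0" using \<delta> by (simp add: v_def)
  define q where "q = 2 powr (1 - ch * real l)"
  have qpos: "q > 0" by (simp add: q_def)
  define W where "W = sc lam j (int l - a)"
  define w where "w = sc lam j (int l - a + int m)"
  have Wup: "W \<le> q * sqrt (real k)" unfolding W_def sc_def q_def a_def ch_def by (rule scale_upper[OF ch[unfolded ch_def] kpos])
  have wlo: "w \<ge> 2 powr (- ch * (real l + real m + 1)) * sqrt (real k)"
  proof -
    have "w \<ge> 2 powr (- ch * (real l + real m + 1)) * real k powr (ch / (2 * ch))"
      unfolding w_def sc_def a_def ch_def by (rule scale_lower[OF ch[unfolded ch_def] ch[unfolded ch_def] kpos])
    moreover have "real k powr (ch / (2 * ch)) = sqrt (real k)" using ch by (simp add: powr_half_sqrt)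
    ultimately show ?thesis by simp
  qed
  have Wpos: "W > 0" by (simp add: W_def sc_pos)
  have Lwle: "W / v \<le> q * sqrt (real k) / \<delta>"
  proof -
    have "W / v \<le> W / \<delta>" using Wpos \<delta> vpos by (intro divide_left_mono) (auto simp: v_def)
    also have "\<dots> \<le> q * sqrt (real k) / \<delta>" using Wup \<delta> by (intro divide_right_mono) auto
    finally show ?thesis .
  qed
  interpret E: est d j lam x y k "int l - a" "int l - a + int m" T0
  proof
    show "j \<in> {1..d}" by (rule j)
    show "\<forall>t\<in>{1..d}. 0 < chi lam t" by (rule chipos)
    show "int l - a \<le> int l - a + int m" by simp
    show "y j \<noteq> x j" using vpos by (auto simp: v_def)
    show "0 < k" by (rule kpos)
    show "0 < T0" using R sk by (simp add: T0_def)
    show "T0 < real k / 2"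
    proof -
      have "T0 * 2 = 2 * R * sqrt (real k)" by (simp add: T0_def)
      also have "\<dots> < sqrt (real k) * sqrt (real k)" using k2 sk by (intro mult_strict_right_mono) auto
      finally show ?thesis using skk by simp
    qed
    show "real k \<le> 8 * T0\<^sup>2"
    proof -
      have "R\<^sup>2 \<ge> 1" using R by (simp add: one_le_power)
      then have "real k * 1 \<le> real k * (8 * R\<^sup>2)" by (intro mult_left_mono) auto
      then show ?thesis by (simp add: T0_def power_mult_distrib algebra_simps)
    qed
    show "sc lam j (int l - a) / \<bar>y j - x j\<bar> \<le> T0 / 2"
    proof -
      have "q * sqrt (real k) / \<delta> \<le> (\<delta> / 2) * sqrt (real k) / \<delta>"
        using l1 \<delta> sk by (intro divide_right_mono mult_right_mono) (auto simp: q_def ch_def)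
      also have "\<dots> = sqrt (real k) / 2" using \<delta> by simp
      also have "\<dots> \<le> T0 / 2" using R sk by (simp add: T0_def)
      finally have "q * sqrt (real k) / \<delta> \<le> T0 / 2" .
      with Lwle have "W / v \<le> T0 / 2" by linarith
      then show ?thesis unfolding W_def v_def .
    qed
    show "4 * T0 * (sc lam j (int l - a) / \<bar>y j - x j\<bar>) / real k \<le> 1 / 10"
    proof -
      have "4 * T0 * (W / v) / real k \<le> 4 * T0 * (q * sqrt (real k) / \<delta>) / real k"
        using Lwle R sk kpos by (intro divide_right_mono mult_left_mono) (auto simp: T0_def)
      also have "\<dots> = 4 * R * q / \<delta>" using sk kpos \<delta> skk by (simp add: T0_def field_simps)
      also have "\<dots> \<le> 4 * R * (\<delta> / (40 * R)) / \<delta>" using l2 R \<delta> by (intro divide_right_mono mult_left_mono) (auto simp: q_def ch_def)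
      also have "\<dots> = 1 / 10" using R \<delta> by simp
      finally show ?thesis unfolding W_def v_def .
    qed
    show "19 \<le> sc lam j (int l - a + int m) / \<bar>y j - x j\<bar>"
    proof -
      have "w / v \<ge> w * eps" using \<delta> vpos eps sc_pos[of lam j "int l - a + int m"] unfolding w_def v_def
        by (simp add: le_divide_eq mult.commute mult_left_mono)
      moreover have "w * eps \<ge> 2 powr (- ch * (real l + real m + 1)) * sqrt (real k) * eps"
        using wlo eps by (intro mult_right_mono) auto
      ultimately show ?thesis using k3 by (simp add: w_def v_def ch_def)
    qed
    show "\<forall>t\<in>{1..d}-{j}. 2 * T0 * \<bar>y t - x t\<bar> < sc lam t (int l - a + int m)"
    proof
      fix t assume t: "t \<in> {1..d}-{j}"
      have tp: "chi lam t > 0" using chipos t by auto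
      have "sc lam t (int l - a + int m) \<ge> 2 powr (- chi lam t * (real l + real m + 1)) * real k powr (chi lam t / (2 * chi lam j))"
        unfolding sc_def a_def by (rule scale_lower[OF tp ch[unfolded ch_def] kpos])
      moreover have "2 * T0 * \<bar>y t - x t\<bar> < 2 powr (- chi lam t * (real l + real m + 1)) * real k powr (chi lam t / (2 * chi lam j))"
        using span t unfolding T0_def by blast
      ultimately show "2 * T0 * \<bar>y t - x t\<bar> < sc lam t (int l - a + int m)" by linarith
    qed
  qed
  define h where "h = real_of_int (\<lfloor>chi lam j * real_of_int (int l - a + int m)\<rfloor> - \<lfloor>chi lam j * real_of_int (int l - a)\<rfloor>) - 1"
  have hge: "h \<ge> ch * real m - 2"
  proof -
    have "chi lam j * real_of_int (int l - a + int m) = chi lam j * real_of_int (int l - a) + ch * real m"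
      by (simp add: ch_def algebra_simps)
    then show ?thesis unfolding h_def by linarith
  qed
  have h0: "h \<ge> 0" using hge m2 by (simp add: ch_def)
  define bad where "bad = 2 * exp (- 2 * (T0/2)\<^sup>2 / real k) + 2 * real (d - 1) * ((2 * (W / v) + 1) * (16 * T0 / real k))"
  have CE: "cond_entropy_part (conv_pow (pmf_of_set {x, y}) k) (dyadic_part d lam (int l - a + int m))
            (join (dyadic_part d lam (int l - a)) (preimage_part ({1..d}-{j}) (dyadic_part d lam (int l - a + int m))))
         \<ge> h * (1 - bad)"
    using E.main_est[OF h_def h0] by (simp add: bad_def W_def v_def)
  have bad0: "bad \<ge> 0" using Wpos vpos R sk kpos by (simp add: bad_def T0_def)
  have badle: "bad \<le> \<beta>"
  proof -
    have "2 * (T0/2)\<^sup>2 / real k = R\<^sup>2 / 2" using sk skk kpos by (simp add: T0_def power_mult_distrib field_simps)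
    then have "- 2 * (T0/2)\<^sup>2 / real k = - R\<^sup>2 / 2" by simp
    then have b1: "2 * exp (- 2 * (T0/2)\<^sup>2 / real k) \<le> \<beta> / 3" using Rbad by (simp only: \<beta>_def ch_def)
    have "2 * real (d - 1) * ((2 * (W / v) + 1) * (16 * T0 / real k)) \<le> 2 * real d * ((2 * (q * sqrt (real k) / \<delta>) + 1) * (16 * T0 / real k))"
      using Lwle Wpos vpos R sk kpos qpos \<delta> by (intro mult_mono add_right_mono) (auto simp: T0_def)
    also have "\<dots> = 64 * real d * R * q / \<delta> + 32 * real d * R / sqrt (real k)"
      using aux_eq1[OF sk, of \<delta> "real d" q R] \<delta> skk by (simp add: T0_def)
    also have "64 * real d * R * q / \<delta> \<le> \<beta> / 3"
    proof -
      have "64 * real d * R * q / \<delta> \<le> 64 * real d * R * (\<beta> * \<delta> / (192 * real d * R)) / \<delta>"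
        using l3 R \<delta> by (intro divide_right_mono mult_left_mono) (auto simp: q_def \<beta>_def ch_def)
      also have "\<dots> \<le> \<beta> / 3" using R \<delta> j by (simp add: field_simps)
      finally show ?thesis .
    qed
    finally have b2: "2 * real (d - 1) * ((2 * (W / v) + 1) * (16 * T0 / real k)) \<le> \<beta> / 3 + \<beta> / 3"
      using k4 by (simp add: \<beta>_def ch_def)
    show ?thesis using b1 b2 by (simp add: bad_def)
  qed
  let ?CE = "cond_entropy_part (conv_pow (pmf_of_set {x, y}) k) (dyadic_part d lam (int l - a + int m))
            (join (dyadic_part d lam (int l - a)) (preimage_part ({1..d}-{j}) (dyadic_part d lam (int l - a + int m))))"
  have mpos: "real m > 0" using m1 eps by (smt (verit) divide_pos_pos)
  have "1 / real m * ?CE > ch - eps"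
  proof (cases "bad \<le> 1")
    case True
    have "?CE \<ge> h * (1 - bad)" by (rule CE)
    moreover have "h * (1 - bad) \<ge> (ch * real m - 2) * (1 - bad)" using hge True by (intro mult_right_mono) auto
    moreover have "(ch * real m - 2) * (1 - bad) \<ge> ch * real m - 2 - bad * (ch * real m)"
      using bad0 by (simp add: algebra_simps)
    moreover have "bad * (ch * real m) \<le> \<beta> * (ch * real m)" using badle ch mpos by (intro mult_right_mono) auto
    moreover have "\<beta> * (ch * real m) = eps * real m / 2" using ch by (simp add: \<beta>_def)
    ultimately have "?CE \<ge> ch * real m - 2 - eps * real m / 2" by linarith
    then have "1 / real m * ?CE \<ge> 1 / real m * (ch * real m - 2 - eps * real m / 2)" using mpos by (intro mult_left_mono) auto
    also have "1 / real m * (ch * real m - 2 - eps * real m / 2) = ch - 2 / real m - eps / 2" using mpos by (simp add: field_simps)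
    finally have A: "1 / real m * ?CE \<ge> ch - 2 / real m - eps / 2" .
    have "2 / real m < eps / 2" using m1 mpos eps by (simp add: field_simps)
    with A show ?thesis by linarith
  next
    case False
    then have "\<beta> > 1" using badle by simp
    then have "eps > 2 * ch" using ch by (simp add: \<beta>_def field_simps)
    moreover have "1 / real m * ?CE \<ge> 0" using mpos cond_entropy_nonneg by (intro mult_nonneg_nonneg) auto
    ultimately show ?thesis using ch by linarith
  qed
  then show ?thesis unfolding a_def ch_def .
qed

lemma ev_span:
  fixes ct ct' K C :: real
  assumes ct: "ct > 0" and ct': "ct' > ct" and K: "K > 0"
  shows "eventually (\<lambda>c::nat. C * sqrt (real c) < K * real c powr (ct' / (2 * ct))) sequentially"
proof -
  define e where "e = ct' / (2 * ct) - 1/2"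
  have e: "e > 0" using ct ct' by (simp add: e_def field_simps)
  show ?thesis
  proof (rule eventually_mono[OF eventually_conj[OF ev_powr_gt[OF e, of "C / K"] eventually_ge_at_top[of 1]]])
    fix c :: nat assume h: "C / K < real c powr e \<and> 1 \<le> c"
    have sc: "sqrt (real c) > 0" using h by simp
    have "ct' / (2 * ct) = 1/2 + e" by (simp add: e_def)
    then have "real c powr (ct' / (2 * ct)) = real c powr (1/2 + e)" by simp
    also have "\<dots> = real c powr (1/2) * real c powr e" by (rule powr_add)
    also have "\<dots> = sqrt (real c) * real c powr e" by (simp add: powr_half_sqrt)
    finally have eq: "K * real c powr (ct' / (2 * ct)) = sqrt (real c) * (K * real c powr e)" by simp
    have "C < K * real c powr e" using h K by (simp add: divide_less_eq mult.commute)
    then have "C * sqrt (real c) < (K * real c powr e) * sqrt (real c)" using sc by (intro mult_strict_right_mono) auto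
    then show "C * sqrt (real c) < K * real c powr (ct' / (2 * ct))" unfolding eq by (simp add: mult.commute)
  qed
qed

lemma chi_mono:
  assumes "0 < lam t'" "lam t' < lam t"
  shows "chi lam t < chi lam t'"
  using assms unfolding chi_def by simp

lemma abs_coord_le_norm:
  assumes "t \<in> {1..d}"
  shows "\<bar>v t\<bar> \<le> eucl_norm d v"
proof -
  have "(v t)\<^sup>2 \<le> (\<Sum>i=1..d. (v i)\<^sup>2)" using assms by (intro member_le_sum) auto
  then have "sqrt ((v t)\<^sup>2) \<le> eucl_norm d v" unfolding eucl_norm_def by (rule real_sqrt_le_mono)
  then show ?thesis by simp
qed

lemma norm_le_sum_abs: "eucl_norm d v \<le> (\<Sum>i=1..d. \<bar>v i\<bar>)"
  using L2_set_le_sum_abs[of v "{1..d}"] unfolding eucl_norm_def L2_set_def by simp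

lemma Rbad_lemma:
  fixes \<beta> :: real
  assumes "\<beta> > 0"
  shows "2 * exp (- (sqrt (12 / \<beta>) + 1)\<^sup>2 / 2) \<le> \<beta> / 3"
proof -
  define R where "R = sqrt (12 / \<beta>) + 1"
  have "sqrt (12 / \<beta>) \<ge> 0" using assms by simp
  then have R0: "R > 0" unfolding R_def by linarith
  have "R \<ge> sqrt (12 / \<beta>)" by (simp add: R_def)
  then have "(sqrt (12 / \<beta>))\<^sup>2 \<le> R\<^sup>2" using assms by (intro power_mono) auto
  moreover have "(sqrt (12 / \<beta>))\<^sup>2 = 12 / \<beta>" using assms by (intro real_sqrt_pow2) simp
  ultimately have R2: "R\<^sup>2 \<ge> 12 / \<beta>" by simp
  have "exp (R\<^sup>2 / 2) \<ge> 1 + R\<^sup>2 / 2" by (rule exp_ge_add_one_self)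
  then have ex: "exp (R\<^sup>2 / 2) \<ge> R\<^sup>2 / 2" by linarith
  have "2 * exp (- R\<^sup>2 / 2) = 2 / exp (R\<^sup>2 / 2)" by (simp add: exp_minus field_simps)
  also have "\<dots> \<le> 2 / (R\<^sup>2 / 2)" using R0 ex by (intro divide_left_mono) auto
  also have "\<dots> = 4 / R\<^sup>2" by simp
  also have "\<dots> \<le> 4 / (12 / \<beta>)" using R2 assms R0 by (intro divide_left_mono) auto
  also have "\<dots> = \<beta> / 3" by simp
  finally show ?thesis by (simp add: R_def)
qed


theorem corollary3p7:
  fixes d :: nat and lam :: "nat \<Rightarrow> real" and eps :: real
  assumes "d \<ge> 1"
    and "\<forall>j\<in>{1..d}. 0 < lam j \<and> lam j < 1"
    and "\<forall>i j. 1 \<le> i \<and> i < j \<and> j \<le> d \<longrightarrow> lam j < lam i"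
    and "0 < eps" and "eps < 1"
  shows "large_choice d
    (\<lambda>m l k. (\<forall>j\<in>{1..d}. 0 < m j \<and> 0 < l j \<and> 0 < k j) \<longrightarrow>
      (\<forall>x y :: nat \<Rightarrow> real.
         (\<forall>i. i \<notin> {1..d} \<longrightarrow> x i = 0 \<and> y i = 0) \<longrightarrow>
         eps \<le> eucl_norm d (\<lambda>i. x i - y i) \<longrightarrow> eucl_norm d (\<lambda>i. x i - y i) \<le> 1 / eps \<longrightarrow>
         (\<exists>j\<in>{1..d}.
            let a = \<lfloor>log 2 (real (k j)) / (2 * chi lam j)\<rfloor> in
            1 / real (m j) *
              cond_entropy_part (conv_pow (pmf_of_set {x, y}) (k j))
                (dyadic_part d lam (int (l j) - a + int (m j)))
                (join (dyadic_part d lam (int (l j) - a))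
                      (preimage_part ({1..d} - {j}) (dyadic_part d lam (int (l j) - a + int (m j)))))
            > chi lam j - eps)))
    (\<lambda>_. 0) (\<lambda>_. 0) (\<lambda>_. 0)"
proof -
  note d1 = assms(1) and lam01 = assms(2) and lamdec = assms(3) and eps0 = assms(4)
  have chipos: "\<forall>t\<in>{1..d}. chi lam t > 0"
    using lam01 unfolding chi_def by auto
  have chimono: "chi lam t < chi lam t'" if "t \<in> {1..d}" "t' \<in> {1..d}" "t < t'" for t t'
    using lamdec that lam01 by (intro chi_mono) auto
  define \<beta> where "\<beta> t = eps / (2 * chi lam t)" for t
  define R where "R t = sqrt (12 / \<beta> t) + 1" for t
  have \<beta>pos: "\<beta> t > 0" if "t \<in> {1..d}" for t using chipos that eps0 by (simp add: \<beta>_def)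
  have R1: "R t \<ge> 1" if "t \<in> {1..d}" for t using \<beta>pos[OF that] by (simp add: R_def)
  define \<Theta> where "\<Theta> t j mj lj kj = 2 powr (- chi lam t * (real lj + real mj + 1)) * real kj powr (chi lam t / (2 * chi lam j)) / (2 * R j * sqrt (real kj))"
    for t j mj lj kj :: nat
  define \<delta> where "\<delta> t m l k = Min (insert (eps / real d) ((\<lambda>j. \<Theta> t j (m j) (l j) (k j)) ` {t<..d}))"
    for t :: nat and m l k :: "nat \<Rightarrow> nat"
  define Am where "Am t (m :: nat \<Rightarrow> nat) (l :: nat \<Rightarrow> nat) (k :: nat \<Rightarrow> nat) (a :: nat) =
      (t \<in> {1..d} \<longrightarrow> real a > 4 / eps \<and> chi lam t * real a \<ge> 2)" for t m l k a
  define Al where "Al t m l k b = (t \<in> {1..d} \<longrightarrow> \<delta> t m l k \<le> 0 \<or>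
      (2 powr (1 - chi lam t * real b) \<le> \<delta> t m l k / 2 \<and>
       2 powr (1 - chi lam t * real b) \<le> \<delta> t m l k / (40 * R t) \<and>
       2 powr (1 - chi lam t * real b) \<le> (eps / (2 * chi lam t)) * \<delta> t m l k / (192 * real d * R t)))"
    for t m l k b
  define Ak where "Ak t (m :: nat \<Rightarrow> nat) (l :: nat \<Rightarrow> nat) (k :: nat \<Rightarrow> nat) (c :: nat) = (t \<in> {1..d} \<longrightarrow> c \<ge> 1 \<and> 2 * R t < sqrt (real c) \<and>
      19 \<le> 2 powr (- chi lam t * (real (l t) + real (m t) + 1)) * sqrt (real c) * eps \<and>
      32 * real d * R t / sqrt (real c) \<le> (eps / (2 * chi lam t)) / 3 \<and>
      (\<forall>t'\<in>{t<..d}. 2 * R t / eps * sqrt (real c) < 2 powr (- chi lam t' * (real (l t) + real (m t) + 1)) * real c powr (chi lam t' / (2 * chi lam t))))"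
    for t m l k c
  show ?thesis
  proof (rule LC_intro[where Am = Am and Al = Al and Ak = Ak])
    fix t m l k
    show "eventually (Am t m l k) sequentially"
    proof (cases "t \<in> {1..d}")
      case False then show ?thesis by (intro always_eventually allI) (auto simp: Am_def)
    next
      case True
      have ct: "chi lam t > 0" using chipos True by auto
      show ?thesis
      proof (rule eventually_mono[OF eventually_conj[OF ev_real_gt[of "4 / eps"] ev_real_gt[of "2 / chi lam t"]]])
        fix a :: nat assume "4 / eps < real a \<and> 2 / chi lam t < real a"
        then show "Am t m l k a" using ct by (simp add: Am_def field_simps)
      qed
    qed
  next
    fix t m l k
    show "eventually (Al t m l k) sequentially"
    proof (cases "t \<in> {1..d} \<and> \<delta> t m l k > 0")
      case False then show ?thesis by (intro always_eventually allI) (auto simp: Al_def)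
    next
      case True
      have ct: "chi lam t > 0" using chipos True by auto
      have Rt: "R t \<ge> 1" using R1 True by auto
      have bt: "eps / (2 * chi lam t) > 0" using ct eps0 by simp
      have dpos: "real d > 0" using d1 by simp
      have ev: "eventually (\<lambda>b::nat. 2 powr (1 - chi lam t * real b) \<le> \<delta> t m l k / 2 \<and>
            2 powr (1 - chi lam t * real b) \<le> \<delta> t m l k / (40 * R t) \<and>
            2 powr (1 - chi lam t * real b) \<le> (eps / (2 * chi lam t)) * \<delta> t m l k / (192 * real d * R t)) sequentially"
        using True Rt bt dpos eps0 ct
        by (intro eventually_conj ev_two_powr_small ct) (auto intro!: divide_pos_pos mult_pos_pos)
      show ?thesis by (rule eventually_mono[OF ev]) (simp add: Al_def)
    qed
  next
    fix t m l k
    show "eventually (Ak t m l k) sequentially"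
    proof (cases "t \<in> {1..d}")
      case False then show ?thesis by (intro always_eventually allI) (auto simp: Ak_def)
    next
      case True
      have ct: "chi lam t > 0" using chipos True by auto
      have Rt: "R t \<ge> 1" using R1 True by auto
      have bt: "eps / (2 * chi lam t) > 0" using ct eps0 by simp
      define K where "K = 2 powr (- chi lam t * (real (l t) + real (m t) + 1))"
      have K: "K > 0" by (simp add: K_def)
      have e1: "eventually (\<lambda>c::nat. c \<ge> 1) sequentially" by (rule eventually_ge_at_top)
      have e2: "eventually (\<lambda>c::nat. 2 * R t < sqrt (real c)) sequentially" by (rule ev_sqrt_gt)
      have e3: "eventually (\<lambda>c::nat. 19 \<le> K * sqrt (real c) * eps) sequentially"
      proof (rule eventually_mono[OF ev_sqrt_gt[of "19 / (K * eps)"]])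
        fix c :: nat assume "19 / (K * eps) < sqrt (real c)"
        then have "19 < sqrt (real c) * (K * eps)" using K eps0 by (simp add: divide_less_eq)
        then show "19 \<le> K * sqrt (real c) * eps" by (simp add: algebra_simps)
      qed
      have e4: "eventually (\<lambda>c::nat. 32 * real d * R t / sqrt (real c) \<le> (eps / (2 * chi lam t)) / 3) sequentially"
      proof -
        define bb where "bb = eps / (2 * chi lam t)"
        have bb: "bb > 0" using bt by (simp add: bb_def)
        have nn: "0 \<le> 96 * real d * R t" using Rt by simp
        have "eventually (\<lambda>c::nat. 32 * real d * R t / sqrt (real c) \<le> bb / 3) sequentially"
        proof (rule eventually_mono[OF ev_sqrt_gt[of "96 * real d * R t / bb"]])
          fix c :: nat assume h: "96 * real d * R t / bb < sqrt (real c)"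
          have "0 \<le> 96 * real d * R t / bb" using bb nn by simp
          then have sc: "sqrt (real c) > 0" using h by linarith
          have "96 * real d * R t < sqrt (real c) * bb" using h bb by (simp add: pos_divide_less_eq)
          then show "32 * real d * R t / sqrt (real c) \<le> bb / 3" using sc
            by (simp add: pos_divide_le_eq mult.commute mult.left_commute)
        qed
        then show ?thesis by (simp add: bb_def)
      qed
      have e5: "eventually (\<lambda>c::nat. \<forall>t'\<in>{t<..d}. 2 * R t / eps * sqrt (real c) < 2 powr (- chi lam t' * (real (l t) + real (m t) + 1)) * real c powr (chi lam t' / (2 * chi lam t))) sequentially"
      proof (rule eventually_ball_finite)
        show "finite {t<..d}" by simp
        show "\<forall>t'\<in>{t<..d}. eventually (\<lambda>c::nat. 2 * R t / eps * sqrt (real c) < 2 powr (- chi lam t' * (real (l t) + real (m t) + 1)) * real c powr (chi lam t' / (2 * chi lam t))) sequentially"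
        proof
          fix t' assume t': "t' \<in> {t<..d}"
          have "chi lam t < chi lam t'" using chimono[of t t'] True t' by auto
          then show "eventually (\<lambda>c::nat. 2 * R t / eps * sqrt (real c) < 2 powr (- chi lam t' * (real (l t) + real (m t) + 1)) * real c powr (chi lam t' / (2 * chi lam t))) sequentially"
            by (intro ev_span ct) simp_all
        qed
      qed
      show ?thesis
        by (rule eventually_mono[OF eventually_conj[OF e1 eventually_conj[OF e2 eventually_conj[OF e3 eventually_conj[OF e4 e5]]]]])
           (simp add: Ak_def K_def)
    qed
  next
    fix t :: nat and m l k m' l' k' :: "nat \<Rightarrow> nat"
    show "Am t m l k = Am t m' l' k'" by (simp add: Am_def fun_eq_iff)
  next
    fix t :: nat and m l k m' l' k' :: "nat \<Rightarrow> nat"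
    assume agr: "\<forall>i>t. m i = m' i \<and> l i = l' i \<and> k i = k' i"
    have "\<delta> t m l k = \<delta> t m' l' k'" unfolding \<delta>_def using agr by (intro arg_cong[where f=Min] arg_cong[where f="insert _"] image_cong) auto
    then show "Al t m l k = Al t m' l' k'" by (simp add: Al_def fun_eq_iff)
  next
    fix t :: nat and m l k m' l' k' :: "nat \<Rightarrow> nat"
    assume "m t = m' t" "l t = l' t"
    then show "Ak t m l k = Ak t m' l' k'" by (simp add: Ak_def fun_eq_iff)
  next
    fix m l k :: "nat \<Rightarrow> nat"
    assume conds: "\<forall>t\<in>{1..d}. Am t m l k (m t) \<and> Al t m l k (l t) \<and> Ak t m l k (k t)"
    show "(\<forall>j\<in>{1..d}. 0 < m j \<and> 0 < l j \<and> 0 < k j) \<longrightarrow>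
      (\<forall>x y :: nat \<Rightarrow> real.
         (\<forall>i. i \<notin> {1..d} \<longrightarrow> x i = 0 \<and> y i = 0) \<longrightarrow>
         eps \<le> eucl_norm d (\<lambda>i. x i - y i) \<longrightarrow> eucl_norm d (\<lambda>i. x i - y i) \<le> 1 / eps \<longrightarrow>
         (\<exists>j\<in>{1..d}.
            let a = \<lfloor>log 2 (real (k j)) / (2 * chi lam j)\<rfloor> in
            1 / real (m j) *
              cond_entropy_part (conv_pow (pmf_of_set {x, y}) (k j))
                (dyadic_part d lam (int (l j) - a + int (m j)))
                (join (dyadic_part d lam (int (l j) - a))
                      (preimage_part ({1..d} - {j}) (dyadic_part d lam (int (l j) - a + int (m j)))))
            > chi lam j - eps))"
    proof (intro impI allI)
      fix x y :: "nat \<Rightarrow> real"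
      assume nlo: "eps \<le> eucl_norm d (\<lambda>i. x i - y i)" and nhi: "eucl_norm d (\<lambda>i. x i - y i) \<le> 1 / eps"
      define v where "v i = y i - x i" for i
      have nv: "eucl_norm d (\<lambda>i. x i - y i) = eucl_norm d v"
        unfolding eucl_norm_def v_def by (simp add: power2_commute)
      have vle: "\<bar>v t\<bar> \<le> 1 / eps" if "t \<in> {1..d}" for t
        using abs_coord_le_norm[OF that, of v] nhi nv by simp
      have kge: "k t \<ge> 1" if "t \<in> {1..d}" for t using conds that by (auto simp: Ak_def)
      have \<Theta>pos: "\<Theta> t j (m j) (l j) (k j) > 0" if "j \<in> {1..d}" for t j
        using kge[OF that] R1[OF that] by (simp add: \<Theta>_def)
      have \<delta>pos: "\<delta> t m l k > 0" for t
        unfolding \<delta>_def using \<Theta>pos eps0 d1 by (subst Min_gr_iff) auto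
      have \<delta>le_eps: "\<delta> t m l k \<le> eps / real d" for t unfolding \<delta>_def by (intro Min_le) auto
      have \<delta>le_\<Theta>: "\<delta> t m l k \<le> \<Theta> t j (m j) (l j) (k j)" if "j \<in> {t<..d}" for t j
        unfolding \<delta>_def using that by (intro Min_le) auto
      have ex: "\<exists>t. t \<in> {1..d} \<and> \<delta> t m l k \<le> \<bar>v t\<bar>"
      proof (rule ccontr)
        assume "\<not> ?thesis"
        then have lt: "\<bar>v t\<bar> < eps / real d" if "t \<in> {1..d}" for t using that \<delta>le_eps[of t] by force
        have "(\<Sum>i=1..d. \<bar>v i\<bar>) < (\<Sum>i=1..d. eps / real d)" using d1 by (intro sum_strict_mono lt) auto
        also have "\<dots> = eps" using d1 by simp
        finally show False using nlo nv norm_le_sum_abs[of d v] by linarith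
      qed
      define j where "j = (LEAST t. t \<in> {1..d} \<and> \<delta> t m l k \<le> \<bar>v t\<bar>)"
      have jprop: "j \<in> {1..d} \<and> \<delta> j m l k \<le> \<bar>v j\<bar>" unfolding j_def using ex by (metis (mono_tags, lifting) LeastI)
      have below: "\<bar>v t\<bar> < \<delta> t m l k" if "t \<in> {1..d}" "t < j" for t
        using not_less_Least[of t "\<lambda>t. t \<in> {1..d} \<and> \<delta> t m l k \<le> \<bar>v t\<bar>"] that unfolding j_def[symmetric] by auto
      have j: "j \<in> {1..d}" using jprop by simp
      have cj: "Am j m l (k) (m j)" "Al j m l k (l j)" "Ak j m l k (k j)" using conds j by auto
      have step: "1 / real (m j) * cond_entropy_part (conv_pow (pmf_of_set {x, y}) (k j))
          (dyadic_part d lam (int (l j) - \<lfloor>log 2 (real (k j)) / (2 * chi lam j)\<rfloor> + int (m j)))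
          (join (dyadic_part d lam (int (l j) - \<lfloor>log 2 (real (k j)) / (2 * chi lam j)\<rfloor>))
            (preimage_part ({1..d}-{j}) (dyadic_part d lam (int (l j) - \<lfloor>log 2 (real (k j)) / (2 * chi lam j)\<rfloor> + int (m j)))))
         > chi lam j - eps"
      proof (rule step_j[where R = "R j" and \<delta> = "\<delta> j m l k"])
        show "j \<in> {1..d}" by (rule j)
        show "\<forall>t\<in>{1..d}. 0 < chi lam t" by (rule chipos)
        show "0 < eps" by (rule eps0)
        show "1 \<le> R j" by (rule R1[OF j])
        show "2 * exp (- (R j)\<^sup>2 / 2) \<le> eps / (2 * chi lam j) / 3"
          unfolding R_def using Rbad_lemma[OF \<beta>pos[OF j]] by (simp add: \<beta>_def)
        show "0 < \<delta> j m l k" by (rule \<delta>pos)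
        show "\<delta> j m l k \<le> \<bar>y j - x j\<bar>" using jprop by (simp add: v_def)
        show "\<bar>y j - x j\<bar> \<le> 1 / eps" using vle[OF j] by (simp add: v_def)
        show "4 / eps < real (m j)" "2 \<le> chi lam j * real (m j)" using cj(1) j by (auto simp: Am_def)
        have "\<not> \<delta> j m l k \<le> 0" using \<delta>pos[of j] by simp
        then show "2 powr (1 - chi lam j * real (l j)) \<le> \<delta> j m l k / 2"
          "2 powr (1 - chi lam j * real (l j)) \<le> \<delta> j m l k / (40 * R j)"
          "2 powr (1 - chi lam j * real (l j)) \<le> eps / (2 * chi lam j) * \<delta> j m l k / (192 * real d * R j)"
          using cj(2) j by (auto simp: Al_def)
        show "1 \<le> k j" "2 * R j < sqrt (real (k j))"
          "19 \<le> 2 powr (- chi lam j * (real (l j) + real (m j) + 1)) * sqrt (real (k j)) * eps"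
          "32 * real d * R j / sqrt (real (k j)) \<le> eps / (2 * chi lam j) / 3"
          using cj(3) j by (auto simp: Ak_def)
        show "\<forall>t\<in>{1..d} - {j}. 2 * (R j * sqrt (real (k j))) * \<bar>y t - x t\<bar>
           < 2 powr (- chi lam t * (real (l j) + real (m j) + 1)) * real (k j) powr (chi lam t / (2 * chi lam j))"
        proof
          fix t assume t: "t \<in> {1..d} - {j}"
          have skj: "sqrt (real (k j)) > 0" using kge[OF j] by simp
          have Rj: "R j > 0" using R1[OF j] by simp
          show "2 * (R j * sqrt (real (k j))) * \<bar>y t - x t\<bar>
           < 2 powr (- chi lam t * (real (l j) + real (m j) + 1)) * real (k j) powr (chi lam t / (2 * chi lam j))"
          proof (cases "t < j")
            case True
            have "\<bar>v t\<bar> < \<Theta> t j (m j) (l j) (k j)"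
              using below[of t] t True \<delta>le_\<Theta>[of j t] j by force
            then have "2 * (R j * sqrt (real (k j))) * \<bar>v t\<bar> < 2 * (R j * sqrt (real (k j))) * \<Theta> t j (m j) (l j) (k j)"
              using skj Rj by (intro mult_strict_left_mono) auto
            also have "\<dots> = 2 powr (- chi lam t * (real (l j) + real (m j) + 1)) * real (k j) powr (chi lam t / (2 * chi lam j))"
              using skj Rj by (simp add: \<Theta>_def)
            finally show ?thesis by (simp add: v_def)
          next
            case False
            then have tj: "t \<in> {j<..d}" using t by auto
            have "2 * R j / eps * sqrt (real (k j)) < 2 powr (- chi lam t * (real (l j) + real (m j) + 1)) * real (k j) powr (chi lam t / (2 * chi lam j))"
              using cj(3) j tj by (auto simp: Ak_def)
            moreover have "2 * (R j * sqrt (real (k j))) * \<bar>v t\<bar> \<le> 2 * R j / eps * sqrt (real (k j))"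
            proof -
              have "2 * (R j * sqrt (real (k j))) * \<bar>v t\<bar> \<le> 2 * (R j * sqrt (real (k j))) * (1 / eps)"
                using vle[of t] t skj Rj by (intro mult_left_mono) auto
              then show ?thesis by (simp add: field_simps)
            qed
            ultimately show ?thesis by (simp add: v_def)
          qed
        qed
      qed
      show "\<exists>j\<in>{1..d}.
            let a = \<lfloor>log 2 (real (k j)) / (2 * chi lam j)\<rfloor> in
            1 / real (m j) *
              cond_entropy_part (conv_pow (pmf_of_set {x, y}) (k j))
                (dyadic_part d lam (int (l j) - a + int (m j)))
                (join (dyadic_part d lam (int (l j) - a))
                      (preimage_part ({1..d} - {j}) (dyadic_part d lam (int (l j) - a + int (m j)))))
            > chi lam j - eps"
        using step j unfolding Let_def by blast
    qed
  qed
qed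

end
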